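(* Let $k\ge1$ be an integer, let $c_{(\theta_0,\ldots,\theta_{k+1})}$ be a multicusp, and let $0\le j\le k$. Denote by $(c_{\hat{\theta}_{k+1}})_{\hat{\theta}_j}$ the multigerm obtained from $c_{(\theta_0,\ldots,\theta_{k+1})}$ by removing both branches $c_{\theta_j}$ and $c_{\theta_{k+1}}$. If $[\tilde\xi]\in\ker\left({}_{k+1}\overline{\omega}\,(c_{\hat{\theta}_{k+1}})_{\hat{\theta}_j}\right)\subset m_0^{k+1}\theta_0(2)/m_0^{k+2}\theta_0(2)$, then $$[\tilde\xi]\in\ker\left({}_{k+1}\overline{\omega}\,c_{\hat{\theta}_j}\right)+\ker\left({}_{k+1}\overline{\omega}\,c_{\hat{\theta}_{k+1}}\right).$$
   Context: $\mathbb{K}=\mathbb{R}$ or $\mathbb{C}$; all germs are $C^\infty$ (if $\mathbb{K}=\mathbb{R}$) or holomorphic (if $\mathbb{K}=\mathbb{C}$). For a finite set $S\subset\mathbb{K}^n$, $C_S$ is the algebra of function germs $(\mathbb{K}^n,S)\to\mathbb{K}$, and $C_0$ that of germs $(\mathbb{K}^p,0)\to\mathbb{K}$; $m_0^\ell\subset C_0$ is the ideal of germs whose Taylor series vanish up to order $\ell-1$ ($m_0^0=C_0$). For a multigerm $f:(\mathbb{K}^n,S)\to(\mathbb{K}^p,0)$: $\theta_S(f)\cong C_S^{\,p}$ is the $C_S$-module of vector fields along $f$; $\theta_S(n)=\theta_S(\mathrm{id}_{(\mathbb{K}^n,S)})$, $\theta_0(p)=\theta_{\{0\}}(\mathrm{id}_{(\mathbb{K}^p,0)})\cong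 C_0^{\,p}$; $f^*u=u\circ f$; $f^*m_0^\ell\,\theta_S(f)$ denotes the $C_S$-submodule of $\theta_S(f)$ generated by $\{(u\circ f)\,v: u\in m_0^\ell, v\in\theta_S(f)\}$; $tf(\eta)=df\circ\eta$ for $\eta\in\theta_S(n)$, $\omega f(\xi)=\xi\circ f$ for $\xi\in\theta_0(p)$; $T\mathcal{R}_e(f)=tf(\theta_S(n))$. For $i\ge0$ the $\mathbb{K}$-linear map $${}_i\overline{\omega}f:\frac{m_0^i\theta_0(p)}{m_0^{i+1}\theta_0(p)}\to\frac{f^*m_0^i\theta_S(f)}{T\mathcal{R}_e(f)\cap f^*m_0^i\theta_S(f)+f^*m_0^{i+1}\theta_S(f)},\quad [\xi]\mapsto[\omega f(\xi)].$$ Multicusps: let $c(x)=(x^2,x^3)$ and $R_\theta$ the linear map of $\mathbb{K}^2$ with matrix $\begin{pmatrix}\cos\theta&-\sin\theta\\ \sin\theta&\cos\theta\end{pmatrix}$. Let $\theta_0,\ldots,\theta_i$ be real numbers with $0\le\theta_j<2\pi$ and $0\ne|\theta_j-\theta_k|\ne\pi$ for $j\ne k$. Let $S=\{s_0,\ldots,s_i\}\subset\mathbb{K}$ be distinct points and $c_{\theta_j}:(\mathbb{K},s_j)\to(\mathbb{K}^2,0)$, $c_{\theta_j}(x)=R_{\theta_j}(c(x-s_j))$. The multigerm $\{c_{\theta_0},\ldots,c_{\theta_i}\}:(\mathbb{K},S)\to(\mathbb{K}^2,0)$ is the multicusp $c_{(\theta_0,\ldots,\theta_i)}$. For $i\ge1$,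 $c_{\hat{\theta}_j}:(\mathbb{K},S\setminus\{s_j\})\to(\mathbb{K}^2,0)$ is the multigerm obtained by removing the branch $c_{\theta_j}$. *)

theory Defs
  imports "HOL-Analysis.Analysis"
begin

text \<open>The field K is the type variable 'a (a real normed field: real or complex).
  Differentiability is K-differentiability (field_differentiable), so over real
  this gives C-infinity germs and over complex holomorphic germs.\<close>

definition smooth1_on :: "'a::real_normed_field set \<Rightarrow> ('a \<Rightarrow> 'a) \<Rightarrow> bool" where
  "smooth1_on V g \<longleftrightarrow> open V \<and> (\<forall>n. \<forall>x\<in>V. ((deriv ^^ n) g) field_differentiable (at x))"

definition germ1_at :: "'a::real_normed_field \<Rightarrow> ('a \<Rightarrow> 'a) \<Rightarrow> bool" where
  "germ1_at p g \<longleftrightarrow> (\<exists>V. p \<in> V \<and> smooth1_on V g)"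

text \<open>A vector field along a map (K,p) \<rightarrow> K^2: a K^2-valued smooth germ.\<close>
definition vf1_at :: "'a::real_normed_field \<Rightarrow> ('a \<Rightarrow> 'a \<times> 'a) \<Rightarrow> bool" where
  "vf1_at p v \<longleftrightarrow> germ1_at p (\<lambda>x. fst (v x)) \<and> germ1_at p (\<lambda>x. snd (v x))"

definition partial1 :: "('a::real_normed_field \<times> 'a \<Rightarrow> 'a) \<Rightarrow> 'a \<times> 'a \<Rightarrow> 'a" where
  "partial1 h = (\<lambda>(x, y). deriv (\<lambda>t. h (t, y)) x)"

definition partial2 :: "('a::real_normed_field \<times> 'a \<Rightarrow> 'a) \<Rightarrow> 'a \<times> 'a \<Rightarrow> 'a" where
  "partial2 h = (\<lambda>(x, y). deriv (\<lambda>t. h (x, t)) y)"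

text \<open>All iterated partial derivatives exist and are continuous on the open set U.\<close>
definition smooth2_on :: "('a::real_normed_field \<times> 'a) set \<Rightarrow> ('a \<times> 'a \<Rightarrow> 'a) \<Rightarrow> bool" where
  "smooth2_on U g \<longleftrightarrow> open U \<and>
     (\<exists>F. g \<in> F \<and> (\<forall>h\<in>F. continuous_on U h \<and>
        (\<forall>x y. (x, y) \<in> U \<longrightarrow> (\<lambda>t. h (t, y)) field_differentiable (at x)
                               \<and> (\<lambda>t. h (x, t)) field_differentiable (at y)) \<and>
        partial1 h \<in> F \<and> partial2 h \<in> F))"

definition germ2_at0 :: "('a::real_normed_field \<times> 'a \<Rightarrow> 'a) \<Rightarrow> bool" where
  "germ2_at0 g \<longleftrightarrow> (\<exists>U. (0, 0) \<in> U \<and> smooth2_on U g)"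

text \<open>The ideal m_0^l of C_0: germs whose Taylor series at 0 vanish up to order l-1.\<close>
definition m0 :: "nat \<Rightarrow> ('a::real_normed_field \<times> 'a \<Rightarrow> 'a) \<Rightarrow> bool" where
  "m0 l g \<longleftrightarrow> germ2_at0 g \<and>
     (\<forall>a b. a + b < l \<longrightarrow> ((partial1 ^^ a) ((partial2 ^^ b) g)) (0, 0) = 0)"

text \<open>m_0^l theta_0(2): vector fields (K^2,0) \<rightarrow> K^2 with both components in m_0^l.\<close>
definition vf_m0 :: "nat \<Rightarrow> ('a::real_normed_field \<times> 'a \<Rightarrow> 'a \<times> 'a) \<Rightarrow> bool" where
  "vf_m0 l \<xi> \<longleftrightarrow> m0 l (\<lambda>p. fst (\<xi> p)) \<and> m0 l (\<lambda>p. snd (\<xi> p))"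

text \<open>A multigerm is given by an index set J, base points s j (j \<in> J) and
  branch maps F j (the germ at s j is the germ of F j).  Germs along the
  multigerm are represented by functions on K, compared near each s j.\<close>

definition psmul :: "'a::real_normed_field \<Rightarrow> 'a \<times> 'a \<Rightarrow> 'a \<times> 'a" where
  "psmul c p = (c * fst p, c * snd p)"

text \<open>a \<in> T R_e(f) = tf(theta_S(1)), tf(eta) = df o eta.\<close>
definition in_TRe :: "nat set \<Rightarrow> (nat \<Rightarrow> 'a::real_normed_field) \<Rightarrow> (nat \<Rightarrow> 'a \<Rightarrow> 'a \<times> 'a)
                      \<Rightarrow> ('a \<Rightarrow> 'a \<times> 'a) \<Rightarrow> bool" where
  "in_TRe J s F a \<longleftrightarrow> (\<exists>\<eta>. (\<forall>j\<in>J. germ1_at (s j) \<eta>) \<and>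
     (\<forall>j\<in>J. eventually (\<lambda>x. a x = psmul (\<eta> x)
              (deriv (\<lambda>t. fst (F j t)) x, deriv (\<lambda>t. snd (F j t)) x)) (nhds (s j))))"

text \<open>a \<in> f^* m_0^l theta_S(f): the C_S-submodule generated by (u o f) v, i.e.
  finite sums of such products.\<close>
definition in_pbm :: "nat set \<Rightarrow> (nat \<Rightarrow> 'a::real_normed_field) \<Rightarrow> (nat \<Rightarrow> 'a \<Rightarrow> 'a \<times> 'a)
                      \<Rightarrow> nat \<Rightarrow> ('a \<Rightarrow> 'a \<times> 'a) \<Rightarrow> bool" where
  "in_pbm J s F l a \<longleftrightarrow> (\<exists>(N::nat) u v. (\<forall>i<N. m0 l (u i) \<and> (\<forall>j\<in>J. vf1_at (s j) (v i))) \<and>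
     (\<forall>j\<in>J. eventually (\<lambda>x. a x = (\<Sum>i<N. psmul (u i (F j x)) (v i x))) (nhds (s j))))"

text \<open>[xi] \<in> ker(_i omega-bar f), for xi \<in> m_0^i theta_0(2):
  omega f(xi) = xi o f \<in> (T R_e(f) \<inter> f^* m_0^i theta_S(f)) + f^* m_0^(i+1) theta_S(f).\<close>
definition omega_ker :: "nat set \<Rightarrow> (nat \<Rightarrow> 'a::real_normed_field) \<Rightarrow> (nat \<Rightarrow> 'a \<Rightarrow> 'a \<times> 'a)
                      \<Rightarrow> nat \<Rightarrow> ('a \<times> 'a \<Rightarrow> 'a \<times> 'a) \<Rightarrow> bool" where
  "omega_ker J s F i \<xi> \<longleftrightarrow> (\<exists>a b. in_TRe J s F a \<and> in_pbm J s F i a \<and> in_pbm J s F (Suc i) b \<and>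
     (\<forall>j\<in>J. eventually (\<lambda>x. \<xi> (F j x) = a x + b x) (nhds (s j))))"

definition cusp :: "'a::real_normed_field \<Rightarrow> 'a \<times> 'a" where
  "cusp x = (x ^ 2, x ^ 3)"

definition rot :: "real \<Rightarrow> 'a::real_normed_field \<times> 'a \<Rightarrow> 'a \<times> 'a" where
  "rot th p = (of_real (cos th) * fst p - of_real (sin th) * snd p,
               of_real (sin th) * fst p + of_real (cos th) * snd p)"

definition cusp_branch :: "(nat \<Rightarrow> real) \<Rightarrow> (nat \<Rightarrow> 'a::real_normed_field) \<Rightarrow> nat \<Rightarrow> 'a \<Rightarrow> 'a \<times> 'a" where
  "cusp_branch th s j x = rot (th j) (cusp (x - s j))"

end

theory Submission
  imports Defs "HOL-Computational_Algebra.Polynomial"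
begin



lemma diff_ev:
  assumes "f field_differentiable at x" "eventually (\<lambda>y. f y = g y) (nhds x)"
  shows "g field_differentiable at x"
proof -
  obtain D where "(f has_field_derivative D) (at x)" using assms(1) field_differentiable_def by blast
  moreover have "(f has_field_derivative D) (at x) = (g has_field_derivative D) (at x)"
    by (rule DERIV_cong_ev) (use assms(2) in auto)
  ultimately show ?thesis using field_differentiable_def by blast
qed

lemma open_ev: "open W \<Longrightarrow> x \<in> W \<Longrightarrow> eventually (\<lambda>y. y \<in> W) (nhds x)"
  using eventually_nhds by blast

lemma germ1_transfer:
  assumes "germ1_at p f" "eventually (\<lambda>x. f x = g x) (nhds p)"
  shows "germ1_at p g"
proof -
  obtain V where V: "p \<in> V" "smooth1_on V f" using assms(1) germ1_at_def by blast
  obtain W where W: "open W" "p \<in> W" "\<forall>x\<in>W. f x = g x" using assms(2) eventually_nhds by blast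
  have oV: "open V" using V smooth1_on_def by blast
  have "smooth1_on (V \<inter> W) g"
    unfolding smooth1_on_def
  proof (intro conjI allI ballI)
    show "open (V \<inter> W)" using oV W by auto
    fix n x assume x: "x \<in> V \<inter> W"
    have d: "(deriv ^^ n) f field_differentiable at x" using V x smooth1_on_def by blast
    have ev: "eventually (\<lambda>y. y \<in> W) (nhds x)" using W x open_ev by blast
    have "eventually (\<lambda>y. (deriv ^^ n) f y = (deriv ^^ n) g y) (nhds x)"
    proof (rule eventually_mono[OF ev])
      fix y assume y: "y \<in> W"
      show "(deriv ^^ n) f y = (deriv ^^ n) g y"
        by (rule higher_deriv_cong_ev) (use open_ev[OF W(1) y] W(3) in \<open>auto elim: eventually_mono\<close>)
    qed
    then show "(deriv ^^ n) g field_differentiable at x" using d diff_ev by blast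
  qed
  then show ?thesis unfolding germ1_at_def using V W by blast
qed

lemma germ1_lin:
  assumes "germ1_at p f" "germ1_at p g"
  shows "germ1_at p (\<lambda>x. a * f x + b * g x)"
proof -
  obtain V1 where V1: "p \<in> V1" "smooth1_on V1 f" using assms(1) germ1_at_def by blast
  obtain V2 where V2: "p \<in> V2" "smooth1_on V2 g" using assms(2) germ1_at_def by blast
  define V where "V = V1 \<inter> V2"
  have oV: "open V" using V1 V2 smooth1_on_def V_def by auto
  have df: "\<And>n x. x \<in> V \<Longrightarrow> (deriv ^^ n) f field_differentiable at x"
    using V1 smooth1_on_def V_def by blast
  have dg: "\<And>n x. x \<in> V \<Longrightarrow> (deriv ^^ n) g field_differentiable at x"
    using V2 smooth1_on_def V_def by blast
  have eq: "\<forall>x\<in>V. (deriv ^^ n) (\<lambda>x. a * f x + b * g x) x = a * (deriv ^^ n) f x + b * (deriv ^^ n) g x" for n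
  proof (induction n)
    case 0 then show ?case by simp
  next
    case (Suc n)
    show ?case
    proof
      fix x assume x: "x \<in> V"
      have ev: "eventually (\<lambda>y. (deriv ^^ n) (\<lambda>x. a * f x + b * g x) y = a * (deriv ^^ n) f y + b * (deriv ^^ n) g y) (nhds x)"
        by (rule eventually_mono[OF open_ev[OF oV x]]) (use Suc in blast)
      have "(deriv ^^ Suc n) (\<lambda>x. a * f x + b * g x) x = deriv ((deriv ^^ n) (\<lambda>x. a * f x + b * g x)) x"
        by simp
      also have "\<dots> = deriv (\<lambda>y. a * (deriv ^^ n) f y + b * (deriv ^^ n) g y) x"
        by (rule deriv_cong_ev[OF ev refl])
      also have "\<dots> = a * deriv ((deriv ^^ n) f) x + b * deriv ((deriv ^^ n) g) x"
      proof (rule DERIV_imp_deriv)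
        show "((\<lambda>y. a * (deriv ^^ n) f y + b * (deriv ^^ n) g y) has_field_derivative
            a * deriv ((deriv ^^ n) f) x + b * deriv ((deriv ^^ n) g) x) (at x)"
          using field_differentiable_derivI[OF df[OF x]] field_differentiable_derivI[OF dg[OF x]]
          by (intro DERIV_add DERIV_cmult)
      qed
      finally show "(deriv ^^ Suc n) (\<lambda>x. a * f x + b * g x) x = a * (deriv ^^ Suc n) f x + b * (deriv ^^ Suc n) g x"
        by simp
    qed
  qed
  have "smooth1_on V (\<lambda>x. a * f x + b * g x)"
    unfolding smooth1_on_def
  proof (intro conjI allI ballI oV)
    fix n x assume x: "x \<in> V"
    have ev: "eventually (\<lambda>y. a * (deriv ^^ n) f y + b * (deriv ^^ n) g y = (deriv ^^ n) (\<lambda>x. a * f x + b * g x) y) (nhds x)"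
      by (rule eventually_mono[OF open_ev[OF oV x]]) (use eq in auto)
    have "(\<lambda>y. a * (deriv ^^ n) f y + b * (deriv ^^ n) g y) field_differentiable at x"
    proof -
      have "((\<lambda>y. a * (deriv ^^ n) f y + b * (deriv ^^ n) g y) has_field_derivative
            a * deriv ((deriv ^^ n) f) x + b * deriv ((deriv ^^ n) g) x) (at x)"
        by (intro DERIV_add DERIV_cmult field_differentiable_derivI df dg x)
      then show ?thesis unfolding field_differentiable_def by blast
    qed
    then show "(deriv ^^ n) (\<lambda>x. a * f x + b * g x) field_differentiable at x" using ev diff_ev by blast
  qed
  then show ?thesis unfolding germ1_at_def using V1 V2 V_def by blast
qed

lemma deriv_poly_shift: "deriv (\<lambda>x. poly q (x - w)) = (\<lambda>x. poly (pderiv q) (x - w))"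
proof
  fix x
  have "((\<lambda>x. poly q (x - w)) has_field_derivative poly (pderiv q) (x - w) * 1) (at x)"
    by (rule DERIV_chain2[OF poly_DERIV]) (auto intro!: derivative_eq_intros)
  then show "deriv (\<lambda>x. poly q (x - w)) x = poly (pderiv q) (x - w)" using DERIV_imp_deriv by force
qed

lemma germ1_poly: "germ1_at z (\<lambda>x. poly q (x - w))"
proof -
  have e: "(deriv ^^ n) (\<lambda>x. poly q (x - w)) = (\<lambda>x. poly ((pderiv ^^ n) q) (x - w))" for n
    by (induction n) (simp_all add: deriv_poly_shift)
  have "smooth1_on UNIV (\<lambda>x. poly q (x - w))"
    unfolding smooth1_on_def e
  proof (intro conjI allI ballI open_UNIV)
    fix n x
    have "((\<lambda>x. poly ((pderiv ^^ n) q) (x - w)) has_field_derivative poly (pderiv ((pderiv ^^ n) q)) (x - w) * 1) (at x)"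
      by (rule DERIV_chain2[OF poly_DERIV]) (auto intro!: derivative_eq_intros)
    then show "(\<lambda>x. poly ((pderiv ^^ n) q) (x - w)) field_differentiable at x"
      using field_differentiable_def by blast
  qed
  then show ?thesis unfolding germ1_at_def by blast
qed




definition lf :: "('a::real_normed_field \<times> nat \<times> nat) list \<Rightarrow> 'a \<times> 'a \<Rightarrow> 'a" where
  "lf L p = (\<Sum>(c,a,b)\<leftarrow>L. c * fst p ^ a * snd p ^ b)"

definition hom :: "nat \<Rightarrow> ('a::real_normed_field \<times> nat \<times> nat) list \<Rightarrow> bool" where
  "hom d L \<longleftrightarrow> (\<forall>(c,a,b)\<in>set L. c \<noteq> 0 \<longrightarrow> a + b = d)"

definition hp :: "nat \<Rightarrow> ('a::real_normed_field \<times> 'a \<Rightarrow> 'a) \<Rightarrow> bool" where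
  "hp d f \<longleftrightarrow> (\<exists>L. f = lf L \<and> hom d L)"

definition D1 :: "('a::real_normed_field \<times> nat \<times> nat) list \<Rightarrow> ('a \<times> nat \<times> nat) list" where
  "D1 L = map (\<lambda>(c,a,b). (c * of_nat a, a - 1, b)) L"

definition D2 :: "('a::real_normed_field \<times> nat \<times> nat) list \<Rightarrow> ('a \<times> nat \<times> nat) list" where
  "D2 L = map (\<lambda>(c,a,b). (c * of_nat b, a, b - 1)) L"

lemma lf_Nil[simp]: "lf [] p = 0" by (simp add: lf_def)
lemma lf_Cons[simp]: "lf ((c,a,b)#L) p = c * fst p ^ a * snd p ^ b + lf L p" by (simp add: lf_def)
lemma lf_append[simp]: "lf (L @ L') p = lf L p + lf L' p" by (simp add: lf_def)

lemma lf_deriv1: "((\<lambda>t. lf L (t, y)) has_field_derivative lf (D1 L) (x, y)) (at x)"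
proof (induction L)
  case Nil then show ?case by (simp add: D1_def)
next
  case (Cons e L)
  obtain c a b where e: "e = (c,a,b)" by (cases e)
  have "((\<lambda>t. c * t ^ a * y ^ b) has_field_derivative c * (of_nat a * (1 * x ^ (a - Suc 0))) * y ^ b) (at x)"
    by (intro DERIV_cmult_right DERIV_cmult DERIV_power DERIV_ident)
  then have "((\<lambda>t. c * t ^ a * y ^ b + lf L (t, y)) has_field_derivative
      c * (of_nat a * (1 * x ^ (a - Suc 0))) * y ^ b + lf (D1 L) (x, y)) (at x)"
    using Cons by (intro DERIV_add)
  then show ?case by (simp add: e D1_def mult_ac)
qed

lemma lf_deriv2: "((\<lambda>t. lf L (x, t)) has_field_derivative lf (D2 L) (x, y)) (at y)"
proof (induction L)
  case Nil then show ?case by (simp add: D2_def)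
next
  case (Cons e L)
  obtain c a b where e: "e = (c,a,b)" by (cases e)
  have "((\<lambda>t. c * x ^ a * t ^ b) has_field_derivative c * x ^ a * (of_nat b * (1 * y ^ (b - Suc 0)))) (at y)"
    by (intro DERIV_cmult DERIV_power DERIV_ident)
  then have "((\<lambda>t. c * x ^ a * t ^ b + lf L (x, t)) has_field_derivative
      c * x ^ a * (of_nat b * (1 * y ^ (b - Suc 0))) + lf (D2 L) (x, y)) (at y)"
    using Cons by (intro DERIV_add)
  then show ?case by (simp add: e D2_def mult_ac)
qed

lemma partial1_lf: "partial1 (lf L) = lf (D1 L)"
  by (auto simp: partial1_def intro!: DERIV_imp_deriv lf_deriv1)

lemma partial2_lf: "partial2 (lf L) = lf (D2 L)"
  by (auto simp: partial2_def intro!: DERIV_imp_deriv lf_deriv2)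

lemma lf_cont: "continuous_on UNIV (lf L)"
proof (induction L)
  case Nil then show ?case by (simp add: lf_def)
next
  case (Cons e L)
  obtain c a b where e: "e = (c,a,b)" by (cases e)
  have "continuous_on UNIV (\<lambda>p::'a\<times>'a. c * fst p ^ a * snd p ^ b + lf L p)"
    using Cons by (intro continuous_intros)
  then show ?case by (simp add: e)
qed

lemma germ2_lf: "germ2_at0 (lf L)"
  unfolding germ2_at0_def smooth2_on_def
  apply (rule exI[of _ UNIV], simp)
  apply (rule exI[of _ "range lf"])
  using lf_cont
  by (auto simp: partial1_lf partial2_lf field_differentiable_def intro: lf_deriv1 lf_deriv2)

lemma hom_D1: "hom d L \<Longrightarrow> hom (d - 1) (D1 L)"
  by (auto simp: hom_def D1_def)

lemma hom_D2: "hom d L \<Longrightarrow> hom (d - 1) (D2 L)"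
  by (auto simp: hom_def D2_def)

lemma lf_at0: "hom e L \<Longrightarrow> 0 < e \<Longrightarrow> lf L (0, 0) = 0"
proof (induction L)
  case Nil then show ?case by simp
next
  case (Cons x L)
  obtain c a b where e: "x = (c,a,b)" by (cases x)
  have "hom e L" using Cons.prems by (auto simp: hom_def)
  moreover have "c * 0 ^ a * 0 ^ b = (0::'a)"
    using Cons.prems by (cases "c = 0") (auto simp: hom_def e zero_power)
  ultimately show ?case using Cons by (simp add: e)
qed

lemma iter_D2: "(partial2 ^^ b) (lf L) = lf ((D2 ^^ b) L)"
  by (induction b) (simp_all add: partial2_lf)

lemma iter_D1: "(partial1 ^^ a) (lf L) = lf ((D1 ^^ a) L)"
  by (induction a) (simp_all add: partial1_lf)

lemma hom_iter_D2: "hom d L \<Longrightarrow> hom (d - b) ((D2 ^^ b) L)"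
  by (induction b) (auto dest: hom_D2 simp: diff_Suc)

lemma hom_iter_D1: "hom d L \<Longrightarrow> hom (d - b) ((D1 ^^ b) L)"
  by (induction b) (auto dest: hom_D1 simp: diff_Suc)

lemma hp_m0: "hp d f \<Longrightarrow> m0 d f"
  unfolding hp_def m0_def
proof (elim exE conjE, intro conjI allI impI)
  fix L assume f: "f = lf L" and h: "hom d L"
  show "germ2_at0 f" using f germ2_lf by blast
  fix a b assume ab: "a + b < d"
  have "hom (d - b - a) ((D1 ^^ a) ((D2 ^^ b) L))" using hom_iter_D1 hom_iter_D2 h by blast
  then show "(partial1 ^^ a) ((partial2 ^^ b) f) (0, 0) = 0"
    using ab by (simp add: f iter_D1 iter_D2 lf_at0)
qed




fun tmul :: "('a::real_normed_field \<times> nat \<times> nat) \<Rightarrow> ('a \<times> nat \<times> nat) \<Rightarrow> ('a \<times> nat \<times> nat)" where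
  "tmul (c,a,b) (c',a',b') = (c*c', a+a', b+b')"

fun mulL :: "('a::real_normed_field \<times> nat \<times> nat) list \<Rightarrow> ('a \<times> nat \<times> nat) list \<Rightarrow> ('a \<times> nat \<times> nat) list" where
  "mulL [] L' = []"
| "mulL (x#L) L' = map (tmul x) L' @ mulL L L'"

lemma lf_map_tmul: "lf (map (tmul (c,a,b)) L') p = (c * fst p ^ a * snd p ^ b) * lf L' p"
proof (induction L')
  case Nil then show ?case by simp
next
  case (Cons e L')
  obtain c' a' b' where e: "e = (c',a',b')" by (cases e)
  show ?case using Cons by (simp add: e power_add algebra_simps)
qed

lemma lf_mulL: "lf (mulL L L') p = lf L p * lf L' p"
proof (induction L)
  case Nil then show ?case by simp
next
  case (Cons e L)
  obtain c a b where e: "e = (c,a,b)" by (cases e)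
  show ?case using Cons by (simp add: e lf_map_tmul algebra_simps)
qed

lemma hom_mulL: "hom d L \<Longrightarrow> hom e L' \<Longrightarrow> hom (d + e) (mulL L L')"
proof (induction L)
  case Nil then show ?case by (simp add: hom_def)
next
  case (Cons x L)
  obtain c a b where x: "x = (c,a,b)" by (cases x)
  have "hom d L" using Cons.prems by (auto simp: hom_def)
  then have 1: "hom (d + e) (mulL L L')" using Cons by blast
  have 2: "hom (d + e) (map (tmul x) L')"
    using Cons.prems by (fastforce simp: hom_def x)
  show ?case using 1 2 by (auto simp: hom_def x)
qed

lemma hp_mult: "hp d f \<Longrightarrow> hp e g \<Longrightarrow> hp (d + e) (\<lambda>p. f p * g p)"
  unfolding hp_def
  by (metis (no_types, lifting) ext lf_mulL hom_mulL)

lemma hp_add: "hp d f \<Longrightarrow> hp d g \<Longrightarrow> hp d (\<lambda>p. f p + g p)"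
  unfolding hp_def
proof (elim exE conjE)
  fix L L' assume "f = lf L" "hom d L" "g = lf L'" "hom d L'"
  then show "\<exists>L''. (\<lambda>p. f p + g p) = lf L'' \<and> hom d L''"
    by (intro exI[of _ "L @ L'"]) (auto simp: hom_def)
qed

lemma hp_const: "hp 0 (\<lambda>p. c)"
  unfolding hp_def by (rule exI[of _ "[(c,0,0)]"]) (auto simp: hom_def)

lemma hp_zero: "hp d (\<lambda>p. 0)"
  unfolding hp_def by (rule exI[of _ "[]"]) (auto simp: hom_def)

lemma hp_fst: "hp 1 fst"
  unfolding hp_def by (rule exI[of _ "[(1,1,0)]"]) (auto simp: hom_def)

lemma hp_snd: "hp 1 snd"
  unfolding hp_def by (rule exI[of _ "[(1,0,1)]"]) (auto simp: hom_def)

lemma hp_scale: "hp d f \<Longrightarrow> hp d (\<lambda>p. c * f p)"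
  using hp_mult[OF hp_const] by fastforce

lemma hp_diff: "hp d f \<Longrightarrow> hp d g \<Longrightarrow> hp d (\<lambda>p. f p - g p)"
  using hp_add[of d f "\<lambda>p. (-1) * g p"] hp_scale[of d g "-1"] by simp

lemma hp_cong: "hp d f \<Longrightarrow> d = e \<Longrightarrow> hp e f" by simp

lemma hp_prod: "finite S \<Longrightarrow> (\<forall>x\<in>S. hp 1 (g x)) \<Longrightarrow> hp (card S) (\<lambda>p. \<Prod>x\<in>S. g x p)"
proof (induction S rule: finite_induct)
  case empty then show ?case using hp_const[of 1] by simp
next
  case (insert x F)
  have "hp (1 + card F) (\<lambda>p. g x p * (\<Prod>x\<in>F. g x p))"
    using insert by (intro hp_mult) auto
  then show ?case using insert by simp
qed

lemma hp_sum: "finite S \<Longrightarrow> (\<forall>x\<in>S. hp d (g x)) \<Longrightarrow> hp d (\<lambda>p. \<Sum>x\<in>S. g x p)"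
proof (induction S rule: finite_induct)
  case empty then show ?case using hp_zero by simp
next
  case (insert x F)
  then show ?case by (simp add: hp_add)
qed

lemma hp_pow: "hp 1 f \<Longrightarrow> hp n (\<lambda>p. f p ^ n)"
proof (induction n)
  case 0 then show ?case by (simp add: hp_const)
next
  case (Suc n) then show ?case using hp_mult[of 1 f n "\<lambda>p. f p ^ n"] by simp
qed

lemma lf_homog: "hom d L \<Longrightarrow> lf L (r * x, r * y) = r ^ d * lf L (x, y)"
proof (induction L)
  case Nil then show ?case by simp
next
  case (Cons e L)
  obtain c a b where e: "e = (c,a,b)" by (cases e)
  have "hom d L" using Cons.prems by (auto simp: hom_def)
  then have IH: "lf L (r * x, r * y) = r ^ d * lf L (x, y)" using Cons by blast
  have "c * (r * x) ^ a * (r * y) ^ b = r ^ d * (c * x ^ a * y ^ b)"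
  proof (cases "c = 0")
    case False
    then have "a + b = d" using Cons.prems by (auto simp: hom_def e)
    then show ?thesis by (auto simp: power_mult_distrib power_add algebra_simps)
  qed simp
  then show ?case using IH by (simp add: e algebra_simps)
qed

lemma hp_homog: "hp d f \<Longrightarrow> f (r * x, r * y) = r ^ d * f (x, y)"
  unfolding hp_def using lf_homog by blast

lemma lf_line: "\<exists>q. \<forall>t. lf L (x1 + t * y1, x2 + t * y2) = poly q t"
proof (induction L)
  case Nil then show ?case by (intro exI[of _ 0]) simp
next
  case (Cons e L)
  obtain c a b where e: "e = (c,a,b)" by (cases e)
  obtain q where q: "\<forall>t. lf L (x1 + t * y1, x2 + t * y2) = poly q t" using Cons by blast
  show ?case
    by (rule exI[of _ "smult c ([:x1, y1:] ^ a * [:x2, y2:] ^ b) + q"])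
       (simp add: e q poly_power algebra_simps)
qed

lemma hp_line: "hp d f \<Longrightarrow> \<exists>q. \<forall>t. f (x1 + t * y1, x2 + t * y2) = poly q t"
  unfolding hp_def using lf_line by blast

lemma iter_D2_formula: "(D2 ^^ b) L = map (\<lambda>(c,a,b'). (c * of_nat (\<Prod>i<b. b' - i), a, b' - b)) L"
proof (induction b)
  case 0 then show ?case by (simp add: case_prod_unfold)
next
  case (Suc b)
  show ?case by (simp only: funpow.simps comp_apply Suc) (simp add: D2_def case_prod_unfold prod.lessThan_Suc mult.assoc)
qed

lemma iter_D1_formula: "(D1 ^^ a) L = map (\<lambda>(c,a',b). (c * of_nat (\<Prod>i<a. a' - i), a' - a, b)) L"
proof (induction a)
  case 0 then show ?case by (simp add: case_prod_unfold)
next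
  case (Suc a)
  show ?case by (simp only: funpow.simps comp_apply Suc) (simp add: D1_def case_prod_unfold prod.lessThan_Suc mult.assoc)
qed

definition TL :: "nat \<Rightarrow> (nat \<Rightarrow> 'a::real_normed_field) \<Rightarrow> ('a \<times> nat \<times> nat) list" where
  "TL d D = map (\<lambda>a. (D a / (fact a * fact (d - a)), a, d - a)) [0..<Suc d]"

lemma hom_TL: "hom d (TL d D)"
  by (auto simp: hom_def TL_def)

lemma prod_fact: "(\<Prod>i<n. n - i) = fact n"
  using fact_prod_rev[of n, where 'a=nat] by (simp add: atLeast0LessThan)

lemma TL_value:
  assumes "a \<le> d"
  shows "(partial1 ^^ a) ((partial2 ^^ (d - a)) (lf (TL d D))) (0, 0) = D a"
proof -
  define g where "g a' = D a' / (fact a' * fact (d - a')) * of_nat (\<Prod>i<d - a. (d - a') - i)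
      * of_nat (\<Prod>i<a. a' - i) * (0::'a) ^ (a' - a) * 0 ^ ((d - a') - (d - a))" for a'
  have val: "(partial1 ^^ a) ((partial2 ^^ (d - a)) (lf (TL d D))) (0, 0) = (\<Sum>a'\<in>{0..<Suc d}. g a')"
    unfolding iter_D2 iter_D1 iter_D1_formula iter_D2_formula
    by (simp add: TL_def lf_def g_def sum_set_upt_conv_sum_list_nat[symmetric] o_def algebra_simps)
  have z: "g a' = 0" if "a' \<noteq> a" for a'
  proof (cases "a' < a")
    case True
    then have "(\<Prod>i<a. a' - i) = 0" by (intro prod_zero) auto
    then show ?thesis by (simp add: g_def)
  next
    case False
    then have "a < a'" using that by simp
    then show ?thesis by (simp add: g_def)
  qed
  have "(\<Sum>a'\<in>{0..<Suc d}. g a') = g a + (\<Sum>a'\<in>{0..<Suc d} - {a}. g a')"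
    using assms by (intro sum.remove) auto
  also have "(\<Sum>a'\<in>{0..<Suc d} - {a}. g a') = 0" using z by (intro sum.neutral) auto
  also have "g a = D a"
    unfolding g_def prod_fact diff_self_eq_0 power_0 of_nat_fact by simp
  finally show ?thesis using val by simp
qed




lemma slice1_open: "open U \<Longrightarrow> open {t. (t, y) \<in> U}"
proof -
  assume "open U"
  then have "open ((\<lambda>t. (t, y)) -` U)" by (intro open_vimage continuous_intros)
  then show ?thesis by (simp add: vimage_def)
qed

lemma slice2_open: "open U \<Longrightarrow> open {t. (x, t) \<in> U}"
proof -
  assume "open U"
  then have "open ((\<lambda>t. (x, t)) -` U)" by (intro open_vimage continuous_intros)
  then show ?thesis by (simp add: vimage_def)
qed

definition fam :: "('a::real_normed_field \<times> 'a) set \<Rightarrow> (('a \<times> 'a \<Rightarrow> 'a) set) \<Rightarrow> bool" where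
  "fam U F \<longleftrightarrow> (\<forall>h\<in>F. continuous_on U h \<and>
        (\<forall>x y. (x, y) \<in> U \<longrightarrow> (\<lambda>t. h (t, y)) field_differentiable (at x)
                               \<and> (\<lambda>t. h (x, t)) field_differentiable (at y)) \<and>
        partial1 h \<in> F \<and> partial2 h \<in> F)"

lemma smooth2_fam: "smooth2_on U g \<longleftrightarrow> open U \<and> (\<exists>F. g \<in> F \<and> fam U F)"
  unfolding smooth2_on_def fam_def by blast

lemma fam_mono: "fam U F \<Longrightarrow> V \<subseteq> U \<Longrightarrow> fam V F"
  unfolding fam_def by (meson continuous_on_subset subsetD)

lemma diff_partial1:
  assumes U: "open U" "(x, y) \<in> U" and F: "fam U F" "f \<in> F" and G: "fam U G" "g \<in> G"
    and h: "\<forall>p\<in>U. h p = f p - g p"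
  shows "((\<lambda>t. h (t, y)) has_field_derivative partial1 f (x, y) - partial1 g (x, y)) (at x)"
proof -
  have df: "(\<lambda>t. f (t, y)) field_differentiable (at x)" using F U unfolding fam_def by blast
  have dg: "(\<lambda>t. g (t, y)) field_differentiable (at x)" using G U unfolding fam_def by blast
  have "((\<lambda>t. f (t, y) - g (t, y)) has_field_derivative partial1 f (x, y) - partial1 g (x, y)) (at x)"
    unfolding partial1_def using field_differentiable_derivI[OF df] field_differentiable_derivI[OF dg]
    by (simp add: DERIV_diff)
  then show ?thesis
    by (rule has_field_derivative_transform_within_open[OF _ slice1_open[OF U(1)]]) (use U h in auto)
qed

lemma diff_partial2:
  assumes U: "open U" "(x, y) \<in> U" and F: "fam U F" "f \<in> F" and G: "fam U G" "g \<in> G"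
    and h: "\<forall>p\<in>U. h p = f p - g p"
  shows "((\<lambda>t. h (x, t)) has_field_derivative partial2 f (x, y) - partial2 g (x, y)) (at y)"
proof -
  have df: "(\<lambda>t. f (x, t)) field_differentiable (at y)" using F U unfolding fam_def by blast
  have dg: "(\<lambda>t. g (x, t)) field_differentiable (at y)" using G U unfolding fam_def by blast
  have "((\<lambda>t. f (x, t) - g (x, t)) has_field_derivative partial2 f (x, y) - partial2 g (x, y)) (at y)"
    unfolding partial2_def using field_differentiable_derivI[OF df] field_differentiable_derivI[OF dg]
    by (simp add: DERIV_diff)
  then show ?thesis
    by (rule has_field_derivative_transform_within_open[OF _ slice2_open[OF U(1)]]) (use U h in auto)
qed

lemma fam_diff:
  assumes U: "open U" and F: "fam U F" and G: "fam U G"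
  shows "fam U {h. \<exists>f\<in>F. \<exists>g\<in>G. \<forall>p\<in>U. h p = f p - g p}"
  unfolding fam_def
proof (intro ballI conjI allI impI)
  fix h assume "h \<in> {h. \<exists>f\<in>F. \<exists>g\<in>G. \<forall>p\<in>U. h p = f p - g p}"
  then obtain f g where fg: "f \<in> F" "g \<in> G" "\<forall>p\<in>U. h p = f p - g p" by blast
  have "continuous_on U (\<lambda>p. f p - g p)"
    using F G fg unfolding fam_def by (intro continuous_intros) auto
  then show "continuous_on U h" using fg(3) continuous_on_eq by (metis (no_types, lifting))
  fix x y assume xy: "(x, y) \<in> U"
  show "(\<lambda>t. h (t, y)) field_differentiable at x"
    using diff_partial1[OF U xy F fg(1) G fg(2) fg(3)] field_differentiable_def by blast
  show "(\<lambda>t. h (x, t)) field_differentiable at y"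
    using diff_partial2[OF U xy F fg(1) G fg(2) fg(3)] field_differentiable_def by blast
next
  fix h assume "h \<in> {h. \<exists>f\<in>F. \<exists>g\<in>G. \<forall>p\<in>U. h p = f p - g p}"
  then obtain f g where fg: "f \<in> F" "g \<in> G" "\<forall>p\<in>U. h p = f p - g p" by blast
  have "\<forall>p\<in>U. partial1 h p = partial1 f p - partial1 g p"
    using diff_partial1[OF U _ F fg(1) G fg(2) fg(3)] by (auto simp: partial1_def[of h] intro!: DERIV_imp_deriv)
  moreover have "partial1 f \<in> F" "partial1 g \<in> G" using F G fg unfolding fam_def by auto
  ultimately show "partial1 h \<in> {h. \<exists>f\<in>F. \<exists>g\<in>G. \<forall>p\<in>U. h p = f p - g p}" by blast
  have "\<forall>p\<in>U. partial2 h p = partial2 f p - partial2 g p"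
    using diff_partial2[OF U _ F fg(1) G fg(2) fg(3)] by (auto simp: partial2_def[of h] intro!: DERIV_imp_deriv)
  moreover have "partial2 f \<in> F" "partial2 g \<in> G" using F G fg unfolding fam_def by auto
  ultimately show "partial2 h \<in> {h. \<exists>f\<in>F. \<exists>g\<in>G. \<forall>p\<in>U. h p = f p - g p}" by blast
qed

lemma germ2_diff:
  assumes "germ2_at0 f" "germ2_at0 g"
  shows "germ2_at0 (\<lambda>p. f p - g p) \<and>
    (\<forall>a b. (partial1 ^^ a) ((partial2 ^^ b) (\<lambda>p. f p - g p)) (0, 0)
       = (partial1 ^^ a) ((partial2 ^^ b) f) (0, 0) - (partial1 ^^ a) ((partial2 ^^ b) g) (0, 0))"
proof -
  obtain U1 F1 where 1: "(0,0) \<in> U1" "open U1" "f \<in> F1" "fam U1 F1"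
    using assms(1) unfolding germ2_at0_def smooth2_fam by blast
  obtain U2 F2 where 2: "(0,0) \<in> U2" "open U2" "g \<in> F2" "fam U2 F2"
    using assms(2) unfolding germ2_at0_def smooth2_fam by blast
  define U where "U = U1 \<inter> U2"
  have U: "open U" "(0,0) \<in> U" using 1 2 U_def by auto
  have F1: "fam U F1" using fam_mono[OF 1(4)] U_def by blast
  have F2: "fam U F2" using fam_mono[OF 2(4)] U_def by blast
  define Fd where "Fd = {h. \<exists>f\<in>F1. \<exists>g\<in>F2. \<forall>p\<in>U. h p = f p - g p}"
  have Fd: "fam U Fd" unfolding Fd_def by (rule fam_diff[OF U(1) F1 F2])
  have "(\<lambda>p. f p - g p) \<in> Fd" using 1 2 unfolding Fd_def by blast
  then have g2: "germ2_at0 (\<lambda>p. f p - g p)" unfolding germ2_at0_def smooth2_fam using U Fd by blast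
  have it2: "(partial2 ^^ b) f \<in> F1 \<and> (partial2 ^^ b) g \<in> F2 \<and>
       (\<forall>p\<in>U. (partial2 ^^ b) (\<lambda>p. f p - g p) p = (partial2 ^^ b) f p - (partial2 ^^ b) g p)" for b
  proof (induction b)
    case 0 then show ?case using 1 2 by simp
  next
    case (Suc b)
    then have a: "(partial2 ^^ b) f \<in> F1" "(partial2 ^^ b) g \<in> F2" by auto
    have "\<forall>p\<in>U. partial2 ((partial2 ^^ b) (\<lambda>p. f p - g p)) p = partial2 ((partial2 ^^ b) f) p - partial2 ((partial2 ^^ b) g) p"
      using diff_partial2[OF U(1) _ F1 a(1) F2 a(2)] Suc
      by (auto simp: partial2_def[of "(partial2 ^^ b) (\<lambda>p. f p - g p)"] intro!: DERIV_imp_deriv)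
    moreover have "partial2 ((partial2 ^^ b) f) \<in> F1" "partial2 ((partial2 ^^ b) g) \<in> F2"
      using a F1 F2 unfolding fam_def by auto
    ultimately show ?case by simp
  qed
  have it1: "(partial1 ^^ a) ((partial2 ^^ b) f) \<in> F1 \<and> (partial1 ^^ a) ((partial2 ^^ b) g) \<in> F2 \<and>
       (\<forall>p\<in>U. (partial1 ^^ a) ((partial2 ^^ b) (\<lambda>p. f p - g p)) p
          = (partial1 ^^ a) ((partial2 ^^ b) f) p - (partial1 ^^ a) ((partial2 ^^ b) g) p)" for a b
  proof (induction a)
    case 0 then show ?case using it2 by simp
  next
    case (Suc a)
    then have a: "(partial1 ^^ a) ((partial2 ^^ b) f) \<in> F1" "(partial1 ^^ a) ((partial2 ^^ b) g) \<in> F2" by auto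
    have "\<forall>p\<in>U. partial1 ((partial1 ^^ a) ((partial2 ^^ b) (\<lambda>p. f p - g p))) p
        = partial1 ((partial1 ^^ a) ((partial2 ^^ b) f)) p - partial1 ((partial1 ^^ a) ((partial2 ^^ b) g)) p"
      using diff_partial1[OF U(1) _ F1 a(1) F2 a(2)] Suc
      by (auto simp: partial1_def[of "(partial1 ^^ a) ((partial2 ^^ b) (\<lambda>p. f p - g p))"] intro!: DERIV_imp_deriv)
    moreover have "partial1 ((partial1 ^^ a) ((partial2 ^^ b) f)) \<in> F1" "partial1 ((partial1 ^^ a) ((partial2 ^^ b) g)) \<in> F2"
      using a F1 F2 unfolding fam_def by auto
    ultimately show ?case by simp
  qed
  show ?thesis using g2 it1 U(2) by blast
qed

lemma m0_diff: "m0 d f \<Longrightarrow> m0 d g \<Longrightarrow> m0 d (\<lambda>p. f p - g p)"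
  unfolding m0_def using germ2_diff by fastforce

lemma taylor:
  assumes "m0 d f"
  shows "\<exists>L. hom d L \<and> m0 (Suc d) (\<lambda>p. f p - lf L p)"
proof -
  define D where "D a = (partial1 ^^ a) ((partial2 ^^ (d - a)) f) (0, 0)" for a
  define L where "L = TL d D"
  have h: "hom d L" using hom_TL L_def by blast
  have mL: "m0 d (lf L)" using hp_m0 h hp_def by blast
  have gf: "germ2_at0 f" using assms m0_def by blast
  have gL: "germ2_at0 (lf L)" using germ2_lf by blast
  have "m0 (Suc d) (\<lambda>p. f p - lf L p)"
    unfolding m0_def
  proof (intro conjI allI impI)
    show "germ2_at0 (\<lambda>p. f p - lf L p)" using germ2_diff[OF gf gL] by blast
    fix a b assume ab: "a + b < Suc d"
    have e: "(partial1 ^^ a) ((partial2 ^^ b) (\<lambda>p. f p - lf L p)) (0, 0)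
       = (partial1 ^^ a) ((partial2 ^^ b) f) (0, 0) - (partial1 ^^ a) ((partial2 ^^ b) (lf L)) (0, 0)"
      using germ2_diff[OF gf gL] by blast
    show "(partial1 ^^ a) ((partial2 ^^ b) (\<lambda>p. f p - lf L p)) (0, 0) = 0"
    proof (cases "a + b < d")
      case True then show ?thesis using e assms mL unfolding m0_def by simp
    next
      case False
      then have b: "b = d - a" "a \<le> d" using ab by auto
      show ?thesis using e TL_value[OF b(2), of D] unfolding b(1) L_def D_def by simp
    qed
  qed
  then show ?thesis using h by blast
qed




lemma sum_split_add: "(\<Sum>i<n+m::nat. g i) = (\<Sum>i<n. g i) + (\<Sum>i<m. g (n+i))"
  by (induction m) (simp_all add: add.assoc)

lemma germ1_const: "germ1_at p (\<lambda>x. c)"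
  using germ1_poly[of p "[:c:]" 0] by simp

lemma germ1_neg: "germ1_at p f \<Longrightarrow> germ1_at p (\<lambda>x. - f x)"
  using germ1_lin[of p f f "-1" 0] by simp

lemma germ1_sub: "germ1_at p f \<Longrightarrow> germ1_at p g \<Longrightarrow> germ1_at p (\<lambda>x. f x - g x)"
  using germ1_lin[of p f g 1 "-1"] by simp

lemma vf1_transfer: "vf1_at p f \<Longrightarrow> eventually (\<lambda>x. f x = g x) (nhds p) \<Longrightarrow> vf1_at p g"
proof -
  assume a: "vf1_at p f" "eventually (\<lambda>x. f x = g x) (nhds p)"
  have "eventually (\<lambda>x. fst (f x) = fst (g x)) (nhds p)" "eventually (\<lambda>x. snd (f x) = snd (g x)) (nhds p)"
    using a(2) by (auto elim: eventually_mono)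
  moreover have "germ1_at p (\<lambda>x. fst (f x))" "germ1_at p (\<lambda>x. snd (f x))" using a(1) unfolding vf1_at_def by auto
  ultimately show ?thesis unfolding vf1_at_def using germ1_transfer[of p "\<lambda>x. fst (f x)" "\<lambda>x. fst (g x)"] germ1_transfer[of p "\<lambda>x. snd (f x)" "\<lambda>x. snd (g x)"] by blast
qed

lemma vf1_const: "vf1_at p (\<lambda>x. c)"
  unfolding vf1_at_def by (simp add: germ1_const)

lemma vf1_neg: "vf1_at p f \<Longrightarrow> vf1_at p (\<lambda>x. - f x)"
  unfolding vf1_at_def by (simp add: germ1_neg)

lemma psmul_neg: "psmul c (- v) = - psmul c v" by (simp add: psmul_def)
lemma psmul_zero: "psmul c 0 = 0" by (simp add: psmul_def zero_prod_def)
lemma psmul_zero_left: "psmul 0 v = 0" by (simp add: psmul_def zero_prod_def)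
lemma psmul_diff_left: "psmul (a - b) v = psmul a v - psmul b v" by (simp add: psmul_def algebra_simps)

lemma in_pbm_diff:
  assumes "in_pbm J s F l a1" "in_pbm J s F l a2"
  shows "in_pbm J s F l (\<lambda>x. a1 x - a2 x)"
proof -
  obtain N1 :: nat and u1 v1 where 1: "\<forall>i<N1. m0 l (u1 i) \<and> (\<forall>j\<in>J. vf1_at (s j) (v1 i))"
    "\<forall>j\<in>J. eventually (\<lambda>x. a1 x = (\<Sum>i<N1. psmul (u1 i (F j x)) (v1 i x))) (nhds (s j))"
    using assms(1) unfolding in_pbm_def by blast
  obtain N2 :: nat and u2 v2 where 2: "\<forall>i<N2. m0 l (u2 i) \<and> (\<forall>j\<in>J. vf1_at (s j) (v2 i))"
    "\<forall>j\<in>J. eventually (\<lambda>x. a2 x = (\<Sum>i<N2. psmul (u2 i (F j x)) (v2 i x))) (nhds (s j))"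
    using assms(2) unfolding in_pbm_def by blast
  define u where "u i = (if i < N1 then u1 i else u2 (i - N1))" for i
  define v where "v i = (if i < N1 then v1 i else (\<lambda>x. - v2 (i - N1) x))" for i
  have "\<forall>i<N1+N2. m0 l (u i) \<and> (\<forall>j\<in>J. vf1_at (s j) (v i))"
    using 1(1) 2(1) by (auto simp: u_def v_def intro: vf1_neg)
  moreover have "\<forall>j\<in>J. eventually (\<lambda>x. a1 x - a2 x = (\<Sum>i<N1+N2. psmul (u i (F j x)) (v i x))) (nhds (s j))"
  proof
    fix j assume j: "j \<in> J"
    show "eventually (\<lambda>x. a1 x - a2 x = (\<Sum>i<N1+N2. psmul (u i (F j x)) (v i x))) (nhds (s j))"
      using eventually_conj[OF 1(2)[rule_format, OF j] 2(2)[rule_format, OF j]]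
      by (rule eventually_mono) (simp add: sum_split_add u_def v_def psmul_neg sum_negf)
  qed
  ultimately show ?thesis unfolding in_pbm_def by blast
qed

lemma in_TRe_diff:
  assumes "in_TRe J s F a1" "in_TRe J s F a2"
  shows "in_TRe J s F (\<lambda>x. a1 x - a2 x)"
proof -
  obtain e1 where 1: "\<forall>j\<in>J. germ1_at (s j) e1" "\<forall>j\<in>J. eventually (\<lambda>x. a1 x = psmul (e1 x)
              (deriv (\<lambda>t. fst (F j t)) x, deriv (\<lambda>t. snd (F j t)) x)) (nhds (s j))"
    using assms(1) unfolding in_TRe_def by blast
  obtain e2 where 2: "\<forall>j\<in>J. germ1_at (s j) e2" "\<forall>j\<in>J. eventually (\<lambda>x. a2 x = psmul (e2 x)
              (deriv (\<lambda>t. fst (F j t)) x, deriv (\<lambda>t. snd (F j t)) x)) (nhds (s j))"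
    using assms(2) unfolding in_TRe_def by blast
  show ?thesis unfolding in_TRe_def
  proof (rule exI[of _ "\<lambda>x. e1 x - e2 x"], intro conjI ballI)
    fix j assume j: "j \<in> J"
    show "germ1_at (s j) (\<lambda>x. e1 x - e2 x)" using 1 2 j germ1_sub by blast
    show "eventually (\<lambda>x. a1 x - a2 x = psmul (e1 x - e2 x)
              (deriv (\<lambda>t. fst (F j t)) x, deriv (\<lambda>t. snd (F j t)) x)) (nhds (s j))"
      using eventually_conj[OF 1(2)[rule_format, OF j] 2(2)[rule_format, OF j]]
      by (rule eventually_mono) (simp add: psmul_diff_left)
  qed
qed

lemma omega_ker_diff:
  assumes "omega_ker J s F i \<xi>" "omega_ker J s F i \<zeta>"
  shows "omega_ker J s F i (\<lambda>p. \<xi> p - \<zeta> p)"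
proof -
  obtain a1 b1 where 1: "in_TRe J s F a1" "in_pbm J s F i a1" "in_pbm J s F (Suc i) b1"
     "\<forall>j\<in>J. eventually (\<lambda>x. \<xi> (F j x) = a1 x + b1 x) (nhds (s j))"
    using assms(1) unfolding omega_ker_def by blast
  obtain a2 b2 where 2: "in_TRe J s F a2" "in_pbm J s F i a2" "in_pbm J s F (Suc i) b2"
     "\<forall>j\<in>J. eventually (\<lambda>x. \<zeta> (F j x) = a2 x + b2 x) (nhds (s j))"
    using assms(2) unfolding omega_ker_def by blast
  show ?thesis unfolding omega_ker_def
  proof (intro exI conjI ballI)
    show "in_TRe J s F (\<lambda>x. a1 x - a2 x)" using 1 2 in_TRe_diff by blast
    show "in_pbm J s F i (\<lambda>x. a1 x - a2 x)" using 1 2 in_pbm_diff by blast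
    show "in_pbm J s F (Suc i) (\<lambda>x. b1 x - b2 x)" using 1 2 in_pbm_diff by blast
    fix j assume j: "j \<in> J"
    show "eventually (\<lambda>x. \<xi> (F j x) - \<zeta> (F j x) = (a1 x - a2 x) + (b1 x - b2 x)) (nhds (s j))"
      using eventually_conj[OF 1(4)[rule_format, OF j] 2(4)[rule_format, OF j]]
      by (rule eventually_mono) (simp add: algebra_simps)
  qed
qed

lemma in_TRe_mono: "in_TRe J s F a \<Longrightarrow> J' \<subseteq> J \<Longrightarrow> in_TRe J' s F a"
  unfolding in_TRe_def by blast

lemma in_pbm_mono: "in_pbm J s F l a \<Longrightarrow> J' \<subseteq> J \<Longrightarrow> in_pbm J' s F l a"
  unfolding in_pbm_def by blast

lemma omega_ker_restrict:
  assumes "omega_ker J s F i \<xi>" "J' \<subseteq> J"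
  shows "omega_ker J' s F i \<xi>"
proof -
  obtain a b where "in_TRe J s F a" "in_pbm J s F i a" "in_pbm J s F (Suc i) b"
     "\<forall>j\<in>J. eventually (\<lambda>x. \<xi> (F j x) = a x + b x) (nhds (s j))"
    using assms(1) unfolding omega_ker_def by blast
  then show ?thesis unfolding omega_ker_def using assms(2) in_TRe_mono in_pbm_mono by blast
qed

lemma omega_ker_m0:
  assumes "vf_m0 (Suc i) \<zeta>"
  shows "omega_ker {l} s F i \<zeta>"
  unfolding omega_ker_def
proof (intro exI conjI ballI)
  show "in_TRe {l} s F (\<lambda>x. 0)" unfolding in_TRe_def
    by (rule exI[of _ "\<lambda>x. 0"]) (simp add: germ1_const psmul_zero_left)
  show "in_pbm {l} s F i (\<lambda>x. 0)" unfolding in_pbm_def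
    by (rule exI[of _ 0]) simp
  show "in_pbm {l} s F (Suc i) (\<lambda>x. \<zeta> (F l x))" unfolding in_pbm_def
  proof (intro exI conjI allI impI ballI)
    let ?u = "\<lambda>i p. if i = (0::nat) then fst (\<zeta> p) else snd (\<zeta> p)"
    let ?v = "\<lambda>i x. if i = (0::nat) then (1, 0) else (0::'a, 1::'a)"
    fix i' assume "i' < (2::nat)"
    then show "m0 (Suc i) (?u i')" using assms unfolding vf_m0_def by (cases "i' = 0") auto
    fix j assume "j \<in> {l}"
    show "vf1_at (s j) (?v i')" by (simp add: vf1_const)
  next
    fix j assume j: "j \<in> {l}"
    show "eventually (\<lambda>x. \<zeta> (F l x) = (\<Sum>i<2. psmul (if i = (0::nat) then fst (\<zeta> (F j x)) else snd (\<zeta> (F j x)))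
           (if i = (0::nat) then (1, 0) else (0::'a, 1::'a)))) (nhds (s j))"
      using j by (simp add: psmul_def eval_nat_numeral)
  qed
  fix j assume "j \<in> {l}"
  then show "eventually (\<lambda>x. \<zeta> (F j x) = 0 + \<zeta> (F l x)) (nhds (s j))" by simp
qed




lemma in_TRe_glue:
  assumes "in_TRe J s F a1" "in_TRe {j} s F a2"
    and evJ: "\<forall>m\<in>J. eventually (\<lambda>x. \<not> chi x) (nhds (s m))"
    and evj: "eventually chi (nhds (s j))"
  shows "in_TRe (insert j J) s F (\<lambda>x. if chi x then a2 x else a1 x)"
proof -
  obtain e1 where 1: "\<forall>j\<in>J. germ1_at (s j) e1" "\<forall>j\<in>J. eventually (\<lambda>x. a1 x = psmul (e1 x)
              (deriv (\<lambda>t. fst (F j t)) x, deriv (\<lambda>t. snd (F j t)) x)) (nhds (s j))"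
    using assms(1) unfolding in_TRe_def by blast
  obtain e2 where 2: "germ1_at (s j) e2" "eventually (\<lambda>x. a2 x = psmul (e2 x)
              (deriv (\<lambda>t. fst (F j t)) x, deriv (\<lambda>t. snd (F j t)) x)) (nhds (s j))"
    using assms(2) unfolding in_TRe_def by blast
  show ?thesis unfolding in_TRe_def
  proof (rule exI[of _ "\<lambda>x. if chi x then e2 x else e1 x"], intro conjI ballI)
    fix m assume m: "m \<in> insert j J"
    show "germ1_at (s m) (\<lambda>x. if chi x then e2 x else e1 x)"
    proof (cases "m = j")
      case True
      show ?thesis unfolding True by (rule germ1_transfer[OF 2(1)]) (use evj in \<open>auto elim: eventually_mono\<close>)
    next
      case False
      then have m: "m \<in> J" using m by simp
      show ?thesis by (rule germ1_transfer[OF 1(1)[rule_format, OF m]]) (use evJ m in \<open>auto elim: eventually_mono\<close>)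
    qed
    show "eventually (\<lambda>x. (if chi x then a2 x else a1 x) = psmul (if chi x then e2 x else e1 x)
              (deriv (\<lambda>t. fst (F m t)) x, deriv (\<lambda>t. snd (F m t)) x)) (nhds (s m))"
    proof (cases "m = j")
      case True
      show ?thesis unfolding True using eventually_conj[OF 2(2) evj] by (rule eventually_mono) simp
    next
      case False
      then have m: "m \<in> J" using m by simp
      show ?thesis using eventually_conj[OF 1(2)[rule_format, OF m] evJ[rule_format, OF m]]
        by (rule eventually_mono) simp
    qed
  qed
qed

lemma in_pbm_glue:
  assumes "in_pbm J s F l a1" "in_pbm {j} s F l a2"
    and evJ: "\<forall>m\<in>J. eventually (\<lambda>x. \<not> chi x) (nhds (s m))"
    and evj: "eventually chi (nhds (s j))"
  shows "in_pbm (insert j J) s F l (\<lambda>x. if chi x then a2 x else a1 x)"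
proof -
  obtain N1 :: nat and u1 v1 where 1: "\<forall>i<N1. m0 l (u1 i) \<and> (\<forall>j\<in>J. vf1_at (s j) (v1 i))"
    "\<forall>j\<in>J. eventually (\<lambda>x. a1 x = (\<Sum>i<N1. psmul (u1 i (F j x)) (v1 i x))) (nhds (s j))"
    using assms(1) unfolding in_pbm_def by blast
  obtain N2 :: nat and u2 v2 where 2: "\<forall>i<N2. m0 l (u2 i) \<and> vf1_at (s j) (v2 i)"
    "eventually (\<lambda>x. a2 x = (\<Sum>i<N2. psmul (u2 i (F j x)) (v2 i x))) (nhds (s j))"
    using assms(2) unfolding in_pbm_def by blast
  define u where "u i = (if i < N1 then u1 i else u2 (i - N1))" for i
  define v where "v i = (\<lambda>x. if i < N1 then (if chi x then 0 else v1 i x) else (if chi x then v2 (i - N1) x else 0))" for i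
  have "\<forall>i<N1+N2. m0 l (u i) \<and> (\<forall>m\<in>insert j J. vf1_at (s m) (v i))"
  proof (intro allI impI conjI ballI)
    fix i assume i: "i < N1 + N2"
    show "m0 l (u i)" using 1(1) 2(1) i by (auto simp: u_def)
    fix m assume m: "m \<in> insert j J"
    show "vf1_at (s m) (v i)"
    proof (cases "m = j")
      case True
      show ?thesis
      proof (cases "i < N1")
        case True
        show ?thesis by (rule vf1_transfer[OF vf1_const[of _ 0]]) (use evj \<open>m = j\<close> True in \<open>auto simp: v_def elim: eventually_mono\<close>)
      next
        case False
        then have vv: "vf1_at (s j) (v2 (i - N1))" using 2(1) i by auto
        show ?thesis unfolding \<open>m = j\<close> using vv by (rule vf1_transfer) (use evj \<open>m = j\<close> False in \<open>auto simp: v_def elim: eventually_mono\<close>)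
      qed
    next
      case False
      then have m: "m \<in> J" using m by simp
      show ?thesis
      proof (cases "i < N1")
        case True
        then have "vf1_at (s m) (v1 i)" using 1(1) m by auto
        then show ?thesis by (rule vf1_transfer) (use evJ m True in \<open>auto simp: v_def elim: eventually_mono\<close>)
      next
        case False
        show ?thesis by (rule vf1_transfer[OF vf1_const[of _ 0]]) (use evJ m False in \<open>auto simp: v_def elim: eventually_mono\<close>)
      qed
    qed
  qed
  moreover have "\<forall>m\<in>insert j J. eventually (\<lambda>x. (if chi x then a2 x else a1 x) = (\<Sum>i<N1+N2. psmul (u i (F m x)) (v i x))) (nhds (s m))"
  proof
    fix m assume m: "m \<in> insert j J"
    show "eventually (\<lambda>x. (if chi x then a2 x else a1 x) = (\<Sum>i<N1+N2. psmul (u i (F m x)) (v i x))) (nhds (s m))"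
    proof (cases "m = j")
      case True
      show ?thesis unfolding True using eventually_conj[OF 2(2) evj]
        by (rule eventually_mono) (simp add: sum_split_add u_def v_def psmul_zero)
    next
      case False
      then have m: "m \<in> J" using m by simp
      show ?thesis using eventually_conj[OF 1(2)[rule_format, OF m] evJ[rule_format, OF m]]
        by (rule eventually_mono) (simp add: sum_split_add u_def v_def psmul_zero)
    qed
  qed
  ultimately show ?thesis unfolding in_pbm_def by blast
qed

lemma omega_ker_glue:
  assumes "omega_ker J s F i \<xi>" "omega_ker {j} s F i \<xi>"
    and evJ: "\<forall>m\<in>J. eventually (\<lambda>x. \<not> chi x) (nhds (s m))"
    and evj: "eventually chi (nhds (s j))"
  shows "omega_ker (insert j J) s F i \<xi>"
proof -
  obtain a1 b1 where 1: "in_TRe J s F a1" "in_pbm J s F i a1" "in_pbm J s F (Suc i) b1"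
     "\<forall>m\<in>J. eventually (\<lambda>x. \<xi> (F m x) = a1 x + b1 x) (nhds (s m))"
    using assms(1) unfolding omega_ker_def by blast
  obtain a2 b2 where 2: "in_TRe {j} s F a2" "in_pbm {j} s F i a2" "in_pbm {j} s F (Suc i) b2"
     "eventually (\<lambda>x. \<xi> (F j x) = a2 x + b2 x) (nhds (s j))"
    using assms(2) unfolding omega_ker_def by blast
  show ?thesis unfolding omega_ker_def
  proof (intro exI conjI ballI)
    show "in_TRe (insert j J) s F (\<lambda>x. if chi x then a2 x else a1 x)"
      using in_TRe_glue[OF 1(1) 2(1) evJ evj] .
    show "in_pbm (insert j J) s F i (\<lambda>x. if chi x then a2 x else a1 x)"
      using in_pbm_glue[OF 1(2) 2(2) evJ evj] .
    show "in_pbm (insert j J) s F (Suc i) (\<lambda>x. if chi x then b2 x else b1 x)"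
      using in_pbm_glue[OF 1(3) 2(3) evJ evj] .
    fix m assume m: "m \<in> insert j J"
    show "eventually (\<lambda>x. \<xi> (F m x) = (if chi x then a2 x else a1 x) + (if chi x then b2 x else b1 x)) (nhds (s m))"
    proof (cases "m = j")
      case True
      show ?thesis unfolding True using eventually_conj[OF 2(4) evj] by (rule eventually_mono) simp
    next
      case False
      then have m: "m \<in> J" using m by simp
      show ?thesis using eventually_conj[OF 1(4)[rule_format, OF m] evJ[rule_format, OF m]]
        by (rule eventually_mono) simp
    qed
  qed
qed

lemma omega_ker_empty: "omega_ker {} s F i \<xi>"
proof -
  have a: "in_TRe {} s F (\<lambda>x. 0)" unfolding in_TRe_def by simp
  have b: "in_pbm {} s F l (\<lambda>x. 0)" for l unfolding in_pbm_def by (rule exI[of _ 0]) simp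
  show ?thesis unfolding omega_ker_def using a b by blast
qed

lemma omega_ker_insert:
  assumes "finite J" "s j \<notin> s ` J" "omega_ker J s F i \<xi>" "omega_ker {j} s F i \<xi>"
  shows "omega_ker (insert j J) s F i \<xi>"
proof -
  define d where "d = (if J = {} then 1 else Min ((\<lambda>m. dist (s m) (s j)) ` J) / 2)"
  have dpos: "d > 0"
  proof (cases "J = {}")
    case False
    have "\<forall>m\<in>J. dist (s m) (s j) > 0"
    proof
      fix m assume m: "m \<in> J"
      have "s m \<in> s ` J" using m by (rule imageI)
      then have "s m \<noteq> s j" using assms(2) by auto
      then show "dist (s m) (s j) > 0" by simp
    qed
    then have "Min ((\<lambda>m. dist (s m) (s j)) ` J) > 0" using False assms(1) by (subst Min_gr_iff) auto
    then show ?thesis using False d_def by simp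
  qed (simp add: d_def)
  have dle: "2 * d \<le> dist (s m) (s j)" if "m \<in> J" for m
  proof -
    have "J \<noteq> {}" using that by blast
    then have "d = Min ((\<lambda>m. dist (s m) (s j)) ` J) / 2" by (simp add: d_def)
    moreover have "Min ((\<lambda>m. dist (s m) (s j)) ` J) \<le> dist (s m) (s j)"
      using that assms(1) by (intro Min_le) auto
    ultimately show ?thesis by simp
  qed
  define chi where "chi x = (dist x (s j) < d)" for x
  have "eventually (\<lambda>x. x \<in> ball (s j) d) (nhds (s j))"
    using dpos by (intro eventually_nhds_in_open) auto
  then have evj: "eventually chi (nhds (s j))"
    by (rule eventually_mono) (simp add: chi_def dist_commute)
  have evJ: "\<forall>m\<in>J. eventually (\<lambda>x. \<not> chi x) (nhds (s m))"
  proof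
    fix m assume m: "m \<in> J"
    have "eventually (\<lambda>x. x \<in> ball (s m) d) (nhds (s m))"
      using dpos by (intro eventually_nhds_in_open) auto
    then show "eventually (\<lambda>x. \<not> chi x) (nhds (s m))"
    proof (rule eventually_mono)
      fix x assume x: "x \<in> ball (s m) d"
      have "dist (s m) (s j) \<le> dist (s m) x + dist x (s j)" by (rule dist_triangle)
      then show "\<not> chi x" using x dle[OF m] by (auto simp: chi_def)
    qed
  qed
  show ?thesis using omega_ker_glue[OF assms(3) assms(4) evJ evj] .
qed

lemma omega_ker_all:
  assumes "finite J" "inj_on s J" "\<forall>l\<in>J. omega_ker {l} s F i \<xi>"
  shows "omega_ker J s F i \<xi>"
  using assms
proof (induction J rule: finite_induct)
  case empty show ?case by (simp add: omega_ker_empty)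
next
  case (insert x J)
  have i1: "inj_on s J" and i2: "s x \<notin> s ` J"
    using insert.prems(1) insert.hyps(2) by (auto simp: inj_on_insert)
  have k1: "omega_ker J s F i \<xi>" using insert.IH i1 insert.prems(2) by blast
  have k2: "omega_ker {x} s F i \<xi>" using insert.prems(2) by blast
  show ?case by (rule omega_ker_insert[OF insert.hyps(1) i2 k1 k2])
qed




lemma hp_lin: "hp 1 (\<lambda>p. c * fst p + sn * snd p)"
  using hp_add[OF hp_scale[OF hp_fst, of c] hp_scale[OF hp_snd, of sn]] by simp

lemma germ1_poly': "(\<And>x. f x = poly q (x - w)) \<Longrightarrow> germ1_at z f"
proof -
  assume "\<And>x. f x = poly q (x - w)"
  then have "f = (\<lambda>x. poly q (x - w))" by auto
  then show ?thesis using germ1_poly by simp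
qed

lemma cb_eq: "cusp_branch th s b x =
   (of_real (cos (th b)) * (x - s b)^2 - of_real (sin (th b)) * (x - s b)^3,
    of_real (sin (th b)) * (x - s b)^2 + of_real (cos (th b)) * (x - s b)^3)"
  by (simp add: cusp_branch_def rot_def cusp_def)

lemma norm_cs: "(of_real (cos x) :: 'a::real_normed_field)^2 + of_real (sin x)^2 = 1"
proof -
  have "(of_real (cos x) :: 'a)^2 + of_real (sin x)^2 = of_real ((cos x)^2 + (sin x)^2)" by (simp only: of_real_add of_real_power)
  also have "(cos x)^2 + (sin x)^2 = 1" by (rule sin_cos_squared_add2)
  finally show ?thesis by simp
qed

lemma deriv_cb1: "deriv (\<lambda>t. fst (cusp_branch th s b t)) x =
   of_real (cos (th b)) * (2 * (x - s b)) - of_real (sin (th b)) * (3 * (x - s b)^2)"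
proof -
  have "((\<lambda>t. fst (cusp_branch th s b t)) has_field_derivative
     of_real (cos (th b)) * (2 * (x - s b)) - of_real (sin (th b)) * (3 * (x - s b)^2)) (at x)"
    unfolding cb_eq fst_conv
    by (auto intro!: derivative_eq_intros simp: eval_nat_numeral)
  then show ?thesis by (rule DERIV_imp_deriv)
qed

lemma deriv_cb2: "deriv (\<lambda>t. snd (cusp_branch th s b t)) x =
   of_real (sin (th b)) * (2 * (x - s b)) + of_real (cos (th b)) * (3 * (x - s b)^2)"
proof -
  have "((\<lambda>t. snd (cusp_branch th s b t)) has_field_derivative
     of_real (sin (th b)) * (2 * (x - s b)) + of_real (cos (th b)) * (3 * (x - s b)^2)) (at x)"
    unfolding cb_eq snd_conv
    by (auto intro!: derivative_eq_intros simp: eval_nat_numeral)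
  then show ?thesis by (rule DERIV_imp_deriv)
qed




lemma sum_lt1: "(\<Sum>i<(1::nat). f i) = f 0"
  by (simp add: lessThan_Suc)

lemma construct:
  fixes th :: "nat \<Rightarrow> real" and s :: "nat \<Rightarrow> 'a::real_normed_field" and Q1 Q2 :: "'a \<times> 'a \<Rightarrow> 'a"
  assumes hQ1: "hp d Q1" and hQ2: "hp d Q2" and d: "1 \<le> d"
    and pl1: "\<And>t. Q1 (of_real (cos (th b)) - t * of_real (sin (th b)), of_real (sin (th b)) + t * of_real (cos (th b))) = poly p1 t"
    and pl2: "\<And>t. Q2 (of_real (cos (th b)) - t * of_real (sin (th b)), of_real (sin (th b)) + t * of_real (cos (th b))) = poly p2 t"
    and C1: "- of_real (sin (th b)) * coeff p1 0 + of_real (cos (th b)) * coeff p2 0 = 0"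
    and C2: "2 * (- of_real (sin (th b)) * coeff p1 1 + of_real (cos (th b)) * coeff p2 1)
             = 3 * (of_real (cos (th b)) * coeff p1 0 + of_real (sin (th b)) * coeff p2 0)"
  shows "omega_ker {b} s (cusp_branch th s) d (\<lambda>p. (Q1 p, Q2 p))"
proof -
  define c where "c = (of_real (cos (th b)) :: 'a)"
  define sn where "sn = (of_real (sin (th b)) :: 'a)"
  have nrm: "c^2 + sn^2 = 1" using norm_cs unfolding c_def sn_def by blast
  obtain a10 q1 where P1: "p1 = pCons a10 q1" by (cases p1)
  obtain a11 r1 where Q1': "q1 = pCons a11 r1" by (cases q1)
  obtain a20 q2 where P2: "p2 = pCons a20 q2" by (cases p2)
  obtain a21 r2 where Q2': "q2 = pCons a21 r2" by (cases q2)
  have c1: "c * a20 = sn * a10" using C1 P1 P2 by (simp add: c_def sn_def algebra_simps)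
  have c2: "2 * (- sn * a11 + c * a21) = 3 * (c * a10 + sn * a20)"
    using C2 P1 P2 Q1' Q2' by (simp add: c_def sn_def)
  define A where "A = c * a10 + sn * a20"
  define B where "B = c * a11 + sn * a21"
  have e1: "a10 = c * A"
  proof -
    have "c * A = c^2 * a10 + sn * (c * a20)" by (simp add: A_def power2_eq_square algebra_simps)
    also have "\<dots> = (c^2 + sn^2) * a10" unfolding c1 by (simp add: power2_eq_square algebra_simps)
    finally show ?thesis using nrm by simp
  qed
  have e2: "a20 = sn * A"
  proof -
    have "sn * A = c * (sn * a10) + sn^2 * a20" by (simp add: A_def power2_eq_square algebra_simps)
    also have "\<dots> = (c^2 + sn^2) * a20" unfolding c1[symmetric] by (simp add: power2_eq_square algebra_simps)
    finally show ?thesis using nrm by simp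
  qed
  have e3: "a11 = c * B - 3 * sn * A / 2"
  proof -
    have "2 * (c * B) - sn * (2 * (- sn * a11 + c * a21)) = 2 * (c^2 + sn^2) * a11"
      by (simp add: B_def power2_eq_square algebra_simps)
    then have "2 * (c * B) - sn * (3 * A) = 2 * a11" unfolding c2 nrm A_def by simp
    then show ?thesis by (simp add: field_simps)
  qed
  have e4: "a21 = sn * B + 3 * c * A / 2"
  proof -
    have "2 * (sn * B) + c * (2 * (- sn * a11 + c * a21)) = 2 * (c^2 + sn^2) * a21"
      by (simp add: B_def power2_eq_square algebra_simps)
    then have "2 * (sn * B) + c * (3 * A) = 2 * a21" unfolding c2 nrm A_def by simp
    then show ?thesis by (simp add: field_simps)
  qed
  define m where "m = 2 * d - 1"
  have tm: "t ^ m * t = (t^2) ^ d" for t :: 'a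
  proof -
    have "Suc m = 2 * d" using d m_def by simp
    then show ?thesis by (metis power_Suc2 power_mult)
  qed
  have Fx: "cusp_branch th s b x = ((x - s b)^2 * (c - (x - s b) * sn), (x - s b)^2 * (sn + (x - s b) * c))" for x
    unfolding cb_eq c_def sn_def by (simp add: algebra_simps power2_eq_square power3_eq_cube)
  have lin: "c * fst (cusp_branch th s b x) + sn * snd (cusp_branch th s b x) = (x - s b)^2" for x
  proof -
    have "c * fst (cusp_branch th s b x) + sn * snd (cusp_branch th s b x) = (x - s b)^2 * (c^2 + sn^2)"
      unfolding Fx by (simp add: algebra_simps power2_eq_square)
    then show ?thesis using nrm by simp
  qed
  have QF1: "Q1 (cusp_branch th s b x) = ((x - s b)^2)^d * poly p1 (x - s b)" for x
    unfolding Fx hp_homog[OF hQ1] using pl1 by (simp add: c_def sn_def)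
  have QF2: "Q2 (cusp_branch th s b x) = ((x - s b)^2)^d * poly p2 (x - s b)" for x
    unfolding Fx hp_homog[OF hQ2] using pl2 by (simp add: c_def sn_def)
  define qe where "qe = [:0, 1:] ^ m * [:A/2, B/2:]"
  define qv1 where "qv1 = [:A/2, B/2:] * [:2 * c, - 3 * sn:]"
  define qv2 where "qv2 = [:A/2, B/2:] * [:2 * sn, 3 * c:]"
  define qw1 where "qw1 = r1 + [:3 * (B/2) * sn:]"
  define qw2 where "qw2 = r2 - [:3 * (B/2) * c:]"
  define a where "a x = psmul (poly qe (x - s b)) (deriv (\<lambda>t. fst (cusp_branch th s b t)) x, deriv (\<lambda>t. snd (cusp_branch th s b t)) x)" for x
  define bb where "bb x = psmul ((c * fst (cusp_branch th s b x) + sn * snd (cusp_branch th s b x)) ^ Suc d) (poly qw1 (x - s b), poly qw2 (x - s b))" for x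
  have pqe: "poly qe t = t ^ m * (A/2 + B/2 * t)" for t by (simp add: qe_def poly_power field_simps)
  have A12: "fst (a x) = ((x - s b)^2)^d * ((A/2 + B/2 * (x - s b)) * (2 * c - 3 * sn * (x - s b))) \<and>
             snd (a x) = ((x - s b)^2)^d * ((A/2 + B/2 * (x - s b)) * (2 * sn + 3 * c * (x - s b)))" for x
  proof -
    define t where "t = x - s b"
    define T where "T = (t^2)^d"
    have d1: "deriv (\<lambda>t. fst (cusp_branch th s b t)) x = c * (2 * t) - sn * (3 * t^2)"
      unfolding deriv_cb1 c_def sn_def t_def ..
    have d2: "deriv (\<lambda>t. snd (cusp_branch th s b t)) x = sn * (2 * t) + c * (3 * t^2)"
      unfolding deriv_cb2 c_def sn_def t_def ..
    have a1: "fst (a x) = T * ((A/2 + B/2 * t) * (2 * c - 3 * sn * t))"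
      unfolding a_def psmul_def d1 pqe t_def[symmetric] T_def tm[symmetric]
      by (simp add: algebra_simps power2_eq_square)
    have a2: "snd (a x) = T * ((A/2 + B/2 * t) * (2 * sn + 3 * c * t))"
      unfolding a_def psmul_def d2 pqe t_def[symmetric] T_def tm[symmetric]
      by (simp add: algebra_simps power2_eq_square)
    show ?thesis using a1 a2 unfolding T_def t_def by simp
  qed
  have hu: "m0 n (\<lambda>p. (c * fst p + sn * snd p) ^ n)" for n by (rule hp_m0[OF hp_pow[OF hp_lin]])
  have TRe: "in_TRe {b} s (cusp_branch th s) a"
    unfolding in_TRe_def a_def by (rule exI[of _ "\<lambda>x. poly qe (x - s b)"]) (simp add: germ1_poly)
  have pbm1: "in_pbm {b} s (cusp_branch th s) d a"
    unfolding in_pbm_def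
  proof (intro exI[of _ "1::nat"] exI[of _ "\<lambda>i p. (c * fst p + sn * snd p) ^ d"]
         exI[of _ "\<lambda>i x. (poly qv1 (x - s b), poly qv2 (x - s b))"] conjI allI impI ballI)
    fix i :: nat
    show "m0 d (\<lambda>p. (c * fst p + sn * snd p) ^ d)" by (rule hu)
    fix j assume "j \<in> {b}"
    show "vf1_at (s j) (\<lambda>x. (poly qv1 (x - s b), poly qv2 (x - s b)))"
      unfolding vf1_at_def by (simp add: germ1_poly)
  next
    fix j assume j: "j \<in> {b}"
    have "a x = psmul ((c * fst (cusp_branch th s b x) + sn * snd (cusp_branch th s b x)) ^ d) (poly qv1 (x - s b), poly qv2 (x - s b))" for x
    proof -
      have pv1: "poly qv1 y = (A/2 + B/2 * y) * (2 * c - 3 * sn * y)" for y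
        by (simp add: qv1_def algebra_simps)
      have pv2: "poly qv2 y = (A/2 + B/2 * y) * (2 * sn + 3 * c * y)" for y
        by (simp add: qv2_def algebra_simps)
      show ?thesis using A12[of x] unfolding psmul_def lin pv1 pv2
        by (simp add: prod_eq_iff)
    qed
    then show "eventually (\<lambda>x. a x = (\<Sum>i<(1::nat). psmul ((c * fst (cusp_branch th s j x) + sn * snd (cusp_branch th s j x)) ^ d)
        (poly qv1 (x - s b), poly qv2 (x - s b)))) (nhds (s j))"
      using j by (simp add: sum_lt1)
  qed
  have pbm2: "in_pbm {b} s (cusp_branch th s) (Suc d) bb"
    unfolding in_pbm_def
  proof (intro exI[of _ "1::nat"] exI[of _ "\<lambda>i p. (c * fst p + sn * snd p) ^ Suc d"]
         exI[of _ "\<lambda>i x. (poly qw1 (x - s b), poly qw2 (x - s b))"] conjI allI impI ballI)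
    fix i :: nat
    show "m0 (Suc d) (\<lambda>p. (c * fst p + sn * snd p) ^ Suc d)" by (rule hu)
    fix j assume "j \<in> {b}"
    show "vf1_at (s j) (\<lambda>x. (poly qw1 (x - s b), poly qw2 (x - s b)))"
      unfolding vf1_at_def by (simp add: germ1_poly)
  next
    fix j assume j: "j \<in> {b}"
    then show "eventually (\<lambda>x. bb x = (\<Sum>i<(1::nat). psmul ((c * fst (cusp_branch th s j x) + sn * snd (cusp_branch th s j x)) ^ Suc d)
        (poly qw1 (x - s b), poly qw2 (x - s b)))) (nhds (s j))"
      by (simp add: bb_def)
  qed
  have main: "(Q1 (cusp_branch th s b x), Q2 (cusp_branch th s b x)) = a x + bb x" for x
  proof -
    define t where "t = x - s b"
    define T where "T = (t^2)^d"
    have a1: "fst (a x) = T * ((A/2 + B/2 * t) * (2 * c - 3 * sn * t))"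
      using A12[of x] unfolding T_def t_def by simp
    have a2: "snd (a x) = T * ((A/2 + B/2 * t) * (2 * sn + 3 * c * t))"
      using A12[of x] unfolding T_def t_def by simp
    have b1: "fst (bb x) = T * (t^2 * (poly r1 t + 3 * (B/2) * sn))"
      unfolding bb_def psmul_def lin t_def[symmetric] T_def qw1_def by (simp add: algebra_simps)
    have b2: "snd (bb x) = T * (t^2 * (poly r2 t - 3 * (B/2) * c))"
      unfolding bb_def psmul_def lin t_def[symmetric] T_def qw2_def by (simp add: algebra_simps)
    have q1: "Q1 (cusp_branch th s b x) = T * (a10 + t * (a11 + t * poly r1 t))"
      unfolding QF1 t_def[symmetric] T_def P1 Q1' by simp
    have q2: "Q2 (cusp_branch th s b x) = T * (a20 + t * (a21 + t * poly r2 t))"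
      unfolding QF2 t_def[symmetric] T_def P2 Q2' by simp
    have k1: "a10 + t * (a11 + t * poly r1 t) = (A/2 + B/2 * t) * (2 * c - 3 * sn * t) + t^2 * (poly r1 t + 3 * (B/2) * sn)"
      unfolding e1 e3 by (simp add: field_simps power2_eq_square)
    have k2: "a20 + t * (a21 + t * poly r2 t) = (A/2 + B/2 * t) * (2 * sn + 3 * c * t) + t^2 * (poly r2 t - 3 * (B/2) * c)"
      unfolding e2 e4 by (simp add: field_simps power2_eq_square)
    have f1: "Q1 (cusp_branch th s b x) = fst (a x) + fst (bb x)"
      unfolding q1 a1 b1 k1 by (simp add: algebra_simps)
    have f2: "Q2 (cusp_branch th s b x) = snd (a x) + snd (bb x)"
      unfolding q2 a2 b2 k2 by (simp add: algebra_simps)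
    show ?thesis using f1 f2 by (simp add: prod_eq_iff)
  qed
  show ?thesis
    unfolding omega_ker_def
    by (rule exI[of _ a], rule exI[of _ bb]) (simp add: TRe pbm1 pbm2 main)
qed




lemma coeff_mult_1: "coeff (p * q) 1 = coeff p 0 * coeff q 1 + coeff p 1 * coeff q 0"
  by (simp add: coeff_mult atMost_Suc add.commute)

lemma coeff_prod_lin0: "finite S \<Longrightarrow> coeff (\<Prod>n\<in>S. [:a n, e n:]) 0 = (\<Prod>n\<in>S. a n)"
  by (induction S rule: finite_induct) (simp_all add: coeff_mult_0)

lemma coeff_prod_lin1: "finite S \<Longrightarrow> coeff (\<Prod>n\<in>S. [:a n, e n:]) 1 = (\<Sum>n\<in>S. e n * (\<Prod>k\<in>S - {n}. a k))"
proof (induction S rule: finite_induct)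
  case empty then show ?case by simp
next
  case (insert x F)
  have s: "(\<Sum>n\<in>insert x F. e n * (\<Prod>k\<in>insert x F - {n}. a k)) = e x * (\<Prod>k\<in>F. a k) + a x * (\<Sum>n\<in>F. e n * (\<Prod>k\<in>F - {n}. a k))"
  proof -
    have "(\<Sum>n\<in>insert x F. e n * (\<Prod>k\<in>insert x F - {n}. a k)) = e x * (\<Prod>k\<in>insert x F - {x}. a k) + (\<Sum>n\<in>F. e n * (\<Prod>k\<in>insert x F - {n}. a k))"
      using insert by simp
    also have "(\<Prod>k\<in>insert x F - {x}. a k) = (\<Prod>k\<in>F. a k)" using insert by (simp add: insert_Diff_if)
    also have "(\<Sum>n\<in>F. e n * (\<Prod>k\<in>insert x F - {n}. a k)) = (\<Sum>n\<in>F. a x * (e n * (\<Prod>k\<in>F - {n}. a k)))"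
    proof (rule sum.cong[OF refl])
      fix n assume n: "n \<in> F"
      have "insert x F - {n} = insert x (F - {n})" using n insert by auto
      then show "e n * (\<Prod>k\<in>insert x F - {n}. a k) = a x * (e n * (\<Prod>k\<in>F - {n}. a k))"
        using insert by (simp add: mult_ac)
    qed
    finally show ?thesis by (simp add: sum_distrib_left)
  qed
  show ?case using insert
    by (simp add: coeff_mult_1 coeff_prod_lin0 s algebra_simps)
qed

lemma sumI1: "finite M \<Longrightarrow> (\<Sum>m\<in>M. (\<Prod>k\<in>M - {m}. a k) * a m) = of_nat (card M) * (\<Prod>k\<in>M. a k)"
proof -
  assume f: "finite M"
  have "(\<Sum>m\<in>M. (\<Prod>k\<in>M - {m}. a k) * a m) = (\<Sum>m\<in>M. (\<Prod>k\<in>M. a k))"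
    using f by (intro sum.cong refl) (simp add: prod.remove mult.commute)
  then show ?thesis by simp
qed

lemma sumI3:
  fixes a e :: "nat \<Rightarrow> 'a::comm_ring_1"
  shows "finite M \<Longrightarrow>
  (\<Sum>m\<in>M. a m * (\<Sum>n\<in>M - {m}. e n * (\<Prod>k\<in>M - {m} - {n}. a k)))
   = of_nat (card M - 1) * (\<Sum>n\<in>M. e n * (\<Prod>k\<in>M - {n}. a k))"
proof -
  assume f: "finite M"
  have "(\<Sum>m\<in>M. a m * (\<Sum>n\<in>M - {m}. e n * (\<Prod>k\<in>M - {m} - {n}. a k)))
      = (\<Sum>m\<in>M. \<Sum>n\<in>M - {m}. e n * (\<Prod>k\<in>M - {n}. a k))"
  proof (rule sum.cong[OF refl])
    fix m assume m: "m \<in> M"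
    have "a m * (\<Sum>n\<in>M - {m}. e n * (\<Prod>k\<in>M - {m} - {n}. a k)) = (\<Sum>n\<in>M - {m}. e n * (a m * (\<Prod>k\<in>M - {n} - {m}. a k)))"
      by (simp add: sum_distrib_left algebra_simps Diff_insert2[symmetric] insert_commute)
    also have "\<dots> = (\<Sum>n\<in>M - {m}. e n * (\<Prod>k\<in>M - {n}. a k))"
    proof (rule sum.cong[OF refl])
      fix n assume n: "n \<in> M - {m}"
      have "(\<Prod>k\<in>M - {n}. a k) = a m * (\<Prod>k\<in>M - {n} - {m}. a k)"
        using f n m by (intro prod.remove) auto
      then show "e n * (a m * (\<Prod>k\<in>M - {n} - {m}. a k)) = e n * (\<Prod>k\<in>M - {n}. a k)" by simp
    qed
    finally show "a m * (\<Sum>n\<in>M - {m}. e n * (\<Prod>k\<in>M - {m} - {n}. a k)) = (\<Sum>n\<in>M - {m}. e n * (\<Prod>k\<in>M - {n}. a k))" .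
  qed
  also have "\<dots> = (\<Sum>m\<in>M. (\<Sum>n\<in>M. e n * (\<Prod>k\<in>M - {n}. a k)) - e m * (\<Prod>k\<in>M - {m}. a k))"
    using f by (intro sum.cong refl) (simp add: sum_diff1)
  also have "\<dots> = of_nat (card M) * (\<Sum>n\<in>M. e n * (\<Prod>k\<in>M - {n}. a k)) - (\<Sum>n\<in>M. e n * (\<Prod>k\<in>M - {n}. a k))"
    by (simp add: sum_subtractf)
  also have "\<dots> = of_nat (card M - 1) * (\<Sum>n\<in>M. e n * (\<Prod>k\<in>M - {n}. a k))"
  proof (cases "M = {}")
    case False
    then have "card M \<ge> 1" using f by (simp add: Suc_le_eq card_gt_0_iff)
    then have "of_nat (card M) = (of_nat (card M - 1) :: 'a) + 1" by (simp add: of_nat_diff)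
    then show ?thesis by (simp add: algebra_simps)
  qed simp
  finally show ?thesis .
qed




definition cc :: "(nat \<Rightarrow> real) \<Rightarrow> nat \<Rightarrow> 'a::real_normed_field" where
  "cc th m = of_real (cos (th m))"
definition ss :: "(nat \<Rightarrow> real) \<Rightarrow> nat \<Rightarrow> 'a::real_normed_field" where
  "ss th m = of_real (sin (th m))"
definition ell :: "(nat \<Rightarrow> real) \<Rightarrow> nat \<Rightarrow> 'a::real_normed_field \<times> 'a \<Rightarrow> 'a" where
  "ell th n p = - ss th n * fst p + cc th n * snd p"

definition xiV :: "(nat \<Rightarrow> real) \<Rightarrow> nat set \<Rightarrow> 'a::real_normed_field \<times> 'a \<Rightarrow> 'a \<times> 'a \<Rightarrow> 'a \<times> 'a" where
  "xiV th M V p =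
    (of_nat (2 * card M + 1) * (\<Prod>n\<in>M. ell th n p) * fst V
       + 2 * (- snd p * fst V + fst p * snd V) * (\<Sum>m\<in>M. (\<Prod>n\<in>M - {m}. ell th n p) * cc th m),
     of_nat (2 * card M + 1) * (\<Prod>n\<in>M. ell th n p) * snd V
       + 2 * (- snd p * fst V + fst p * snd V) * (\<Sum>m\<in>M. (\<Prod>n\<in>M - {m}. ell th n p) * ss th m))"

lemma hp_ell: "hp 1 (ell th n)"
proof -
  have e: "ell th n = (\<lambda>p. (- ss th n) * fst p + cc th n * snd p)" by (auto simp: ell_def)
  show ?thesis unfolding e by (rule hp_lin)
qed

lemma hp_jv: "hp 1 (\<lambda>p. - snd p * fst V + fst p * snd V)"
proof -
  have e: "(\<lambda>p. - snd p * fst V + fst p * snd V) = (\<lambda>p. snd V * fst p + (- fst V) * snd p)" by (auto simp: algebra_simps)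
  show ?thesis unfolding e by (rule hp_lin)
qed

lemma hp_xiV:
  assumes f: "finite M" and c: "card M \<ge> 1"
  shows "hp (card M) (\<lambda>p. fst (xiV th M V p))" "hp (card M) (\<lambda>p. snd (xiV th M V p))"
proof -
  have P: "hp (card M) (\<lambda>p. \<Prod>n\<in>M. ell th n p)" using hp_prod[OF f, of "\<lambda>n. ell th n"] hp_ell by blast
  have Pt: "hp (card M - 1) (\<lambda>p. (\<Prod>n\<in>M - {m}. ell th n p) * g)" if "m \<in> M" for m g
  proof -
    have "hp (card (M - {m})) (\<lambda>p. \<Prod>n\<in>M - {m}. ell th n p)"
      using hp_prod[of "M - {m}" "\<lambda>n. ell th n"] f hp_ell by blast
    then have "hp (card (M - {m}) + 0) (\<lambda>p. (\<Prod>n\<in>M - {m}. ell th n p) * g)"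
      using hp_mult[OF _ hp_const] by blast
    then show ?thesis using that f by simp
  qed
  have S: "hp (card M - 1) (\<lambda>p. \<Sum>m\<in>M. (\<Prod>n\<in>M - {m}. ell th n p) * g m)" for g
    using hp_sum[OF f, of "card M - 1" "\<lambda>m p. (\<Prod>n\<in>M - {m}. ell th n p) * g m"] Pt by blast
  have T2: "hp (card M) (\<lambda>p. 2 * (- snd p * fst V + fst p * snd V) * (\<Sum>m\<in>M. (\<Prod>n\<in>M - {m}. ell th n p) * g m))" for g
  proof -
    have "hp (1 + (card M - 1)) (\<lambda>p. 2 * (- snd p * fst V + fst p * snd V) * (\<Sum>m\<in>M. (\<Prod>n\<in>M - {m}. ell th n p) * g m))"
      using hp_mult[OF hp_scale[OF hp_jv, of 2] S[of g]] by simp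
    then show ?thesis using c by simp
  qed
  have T1: "hp (card M) (\<lambda>p. of_nat (2 * card M + 1) * (\<Prod>n\<in>M. ell th n p) * g)" for g
  proof -
    have "hp (card M + 0) (\<lambda>p. of_nat (2 * card M + 1) * (\<Prod>n\<in>M. ell th n p) * g)"
      using hp_mult[OF hp_scale[OF P, of "of_nat (2 * card M + 1)"] hp_const[of g]] by simp
    then show ?thesis by simp
  qed
  show "hp (card M) (\<lambda>p. fst (xiV th M V p))"
    unfolding xiV_def fst_conv using hp_add[OF T1 T2] by simp
  show "hp (card M) (\<lambda>p. snd (xiV th M V p))"
    unfolding xiV_def snd_conv using hp_add[OF T1 T2] by simp
qed




lemma xiV_cond:
  fixes th :: "nat \<Rightarrow> real" and V :: "'a::real_normed_field \<times> 'a"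
  assumes f: "finite M" and c1: "card M \<ge> 1"
  shows "\<exists>p1 p2. (\<forall>t. fst (xiV th M V (cc th b - t * ss th b, ss th b + t * cc th b)) = poly p1 t)
     \<and> (\<forall>t. snd (xiV th M V (cc th b - t * ss th b, ss th b + t * cc th b)) = poly p2 t)
     \<and> - ss th b * coeff p1 0 + cc th b * coeff p2 0
         = (\<Prod>n\<in>M. ell th n (cc th b, ss th b)) * (- ss th b * fst V + cc th b * snd V)
     \<and> 2 * (- ss th b * coeff p1 1 + cc th b * coeff p2 1) - 3 * (cc th b * coeff p1 0 + ss th b * coeff p2 0)
         = - (2 * of_nat (card M) + 3) * (\<Prod>n\<in>M. ell th n (cc th b, ss th b)) * (cc th b * fst V + ss th b * snd V)"
proof -
  define c where "c = (cc th b :: 'a)"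
  define sn where "sn = (ss th b :: 'a)"
  define A where "A n = ell th n (c, sn)" for n
  define E where "E n = ell th n (- sn, c)" for n
  define Bv where "Bv = - sn * fst V + c * snd V"
  define Av where "Av = c * fst V + sn * snd V"
  define K where "K = (of_nat (2 * card M + 1) :: 'a)"
  define PP where "PP = (\<Prod>n\<in>M. [:A n, E n:])"
  define PT where "PT m = (\<Prod>n\<in>M - {m}. [:A n, E n:])" for m
  define pj where "pj = [:Bv, - Av:]"
  define p1 where "p1 = smult (K * fst V) PP + smult 2 (pj * (\<Sum>m\<in>M. smult (cc th m) (PT m)))"
  define p2 where "p2 = smult (K * snd V) PP + smult 2 (pj * (\<Sum>m\<in>M. smult (ss th m) (PT m)))"
  have ell_line: "ell th n (c - t * sn, sn + t * c) = A n + t * E n" for n t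
    by (simp add: ell_def A_def E_def algebra_simps)
  have PPt: "poly PP t = (\<Prod>n\<in>M. ell th n (c - t * sn, sn + t * c))" for t
    by (simp add: PP_def poly_prod ell_line)
  have PTt: "poly (PT m) t = (\<Prod>n\<in>M - {m}. ell th n (c - t * sn, sn + t * c))" for m t
    by (simp add: PT_def poly_prod ell_line)
  have Jt: "poly pj t = - (sn + t * c) * fst V + (c - t * sn) * snd V" for t
    by (simp add: pj_def Bv_def Av_def algebra_simps)
  have L1: "fst (xiV th M V (c - t * sn, sn + t * c)) = poly p1 t" for t
    by (simp add: xiV_def p1_def poly_sum PPt PTt Jt K_def mult_ac)
  have L2: "snd (xiV th M V (c - t * sn, sn + t * c)) = poly p2 t" for t
    by (simp add: xiV_def p2_def poly_sum PPt PTt Jt K_def mult_ac)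
  define PP0 where "PP0 = (\<Prod>n\<in>M. A n)"
  define PP1 where "PP1 = (\<Sum>n\<in>M. E n * (\<Prod>k\<in>M - {n}. A k))"
  define T0 where "T0 m = (\<Prod>k\<in>M - {m}. A k)" for m
  define T1 where "T1 m = (\<Sum>n\<in>M - {m}. E n * (\<Prod>k\<in>M - {m} - {n}. A k))" for m
  have cPP0: "coeff PP 0 = PP0" unfolding PP_def PP0_def using f by (rule coeff_prod_lin0)
  have cPP1: "coeff PP 1 = PP1" unfolding PP_def PP1_def using f by (rule coeff_prod_lin1)
  have cPT0: "coeff (PT m) 0 = T0 m" for m unfolding PT_def T0_def using f by (intro coeff_prod_lin0) auto
  have cPT1: "coeff (PT m) 1 = T1 m" for m unfolding PT_def T1_def using f by (intro coeff_prod_lin1) auto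
  have cPP1': "coeff PP (Suc 0) = PP1" using cPP1 by simp
  have cPT1': "coeff (PT m) (Suc 0) = T1 m" for m using cPT1 by simp
  define S0c where "S0c = (\<Sum>m\<in>M. cc th m * T0 m)"
  define S0s where "S0s = (\<Sum>m\<in>M. ss th m * T0 m)"
  define S1c where "S1c = (\<Sum>m\<in>M. cc th m * T1 m)"
  define S1s where "S1s = (\<Sum>m\<in>M. ss th m * T1 m)"
  have c10: "coeff p1 0 = K * fst V * PP0 + 2 * (Bv * S0c)"
    by (simp add: p1_def coeff_mult_0 coeff_sum cPP0 cPT0 S0c_def pj_def)
  have c20: "coeff p2 0 = K * snd V * PP0 + 2 * (Bv * S0s)"
    by (simp add: p2_def coeff_mult_0 coeff_sum cPP0 cPT0 S0s_def pj_def)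
  have c11: "coeff p1 1 = K * fst V * PP1 + 2 * (Bv * S1c + (- Av) * S0c)"
    by (simp add: p1_def coeff_mult_1 coeff_sum cPP1 cPP1' cPT0 cPT1 cPT1' S0c_def S1c_def pj_def)
  have c21: "coeff p2 1 = K * snd V * PP1 + 2 * (Bv * S1s + (- Av) * S0s)"
    by (simp add: p2_def coeff_mult_1 coeff_sum cPP1 cPP1' cPT0 cPT1 cPT1' S0s_def S1s_def pj_def)
  have wu: "- sn * cc th m + c * ss th m = - A m" for m
    by (simp add: A_def ell_def c_def sn_def algebra_simps)
  have uu: "c * cc th m + sn * ss th m = E m" for m
    by (simp add: E_def ell_def c_def sn_def algebra_simps)
  have F1: "- sn * S0c + c * S0s = - (of_nat (card M) * PP0)"
  proof -
    have "- sn * S0c + c * S0s = (\<Sum>m\<in>M. T0 m * (- sn * cc th m + c * ss th m))"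
      by (simp add: S0c_def S0s_def sum_distrib_left sum.distrib[symmetric] algebra_simps)
    also have "\<dots> = (\<Sum>m\<in>M. T0 m * (- A m))" by (simp only: wu)
    also have "\<dots> = - (\<Sum>m\<in>M. T0 m * A m)" by (simp add: sum_negf)
    also have "(\<Sum>m\<in>M. T0 m * A m) = of_nat (card M) * PP0"
      unfolding T0_def PP0_def by (rule sumI1[OF f])
    finally show ?thesis .
  qed
  have F2: "- sn * S1c + c * S1s = - (of_nat (card M - 1) * PP1)"
  proof -
    have "- sn * S1c + c * S1s = (\<Sum>m\<in>M. T1 m * (- sn * cc th m + c * ss th m))"
      by (simp add: S1c_def S1s_def sum_distrib_left sum.distrib[symmetric] algebra_simps)
    also have "\<dots> = (\<Sum>m\<in>M. T1 m * (- A m))" by (simp only: wu)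
    also have "\<dots> = - (\<Sum>m\<in>M. A m * T1 m)" by (simp add: sum_negf mult.commute)
    also have "(\<Sum>m\<in>M. A m * T1 m) = of_nat (card M - 1) * PP1"
      unfolding T1_def PP1_def by (rule sumI3[OF f])
    finally show ?thesis .
  qed
  have F3: "c * S0c + sn * S0s = PP1"
  proof -
    have "c * S0c + sn * S0s = (\<Sum>m\<in>M. T0 m * (c * cc th m + sn * ss th m))"
      by (simp add: S0c_def S0s_def sum_distrib_left sum.distrib[symmetric] algebra_simps)
    also have "\<dots> = (\<Sum>m\<in>M. T0 m * E m)" by (simp only: uu)
    also have "\<dots> = PP1" by (simp add: PP1_def T0_def mult.commute)
    finally show ?thesis .
  qed
  have Kd: "K = 2 * of_nat (card M) + 1" by (simp add: K_def)
  have dm1: "(of_nat (card M - 1) :: 'a) = of_nat (card M) - 1" using c1 by (simp add: of_nat_diff)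
  have G1: "- sn * coeff p1 0 + c * coeff p2 0 = PP0 * Bv"
  proof -
    have "- sn * coeff p1 0 + c * coeff p2 0 = K * PP0 * (- sn * fst V + c * snd V) + 2 * Bv * (- sn * S0c + c * S0s)"
      unfolding c10 c20 by (simp add: algebra_simps)
    also have "\<dots> = PP0 * Bv" unfolding F1 Kd Bv_def[symmetric] by (simp add: algebra_simps)
    finally show ?thesis .
  qed
  have G2: "2 * (- sn * coeff p1 1 + c * coeff p2 1) - 3 * (c * coeff p1 0 + sn * coeff p2 0)
      = - (2 * of_nat (card M) + 3) * PP0 * Av"
  proof -
    have "2 * (- sn * coeff p1 1 + c * coeff p2 1) - 3 * (c * coeff p1 0 + sn * coeff p2 0)
       = 2 * (K * PP1 * (- sn * fst V + c * snd V) + 2 * Bv * (- sn * S1c + c * S1s) - 2 * Av * (- sn * S0c + c * S0s))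
         - 3 * (K * PP0 * (c * fst V + sn * snd V) + 2 * Bv * (c * S0c + sn * S0s))"
      unfolding c10 c20 c11 c21 by (simp add: algebra_simps)
    also have "\<dots> = - (2 * of_nat (card M) + 3) * PP0 * Av"
      unfolding F1 F2 F3 Kd dm1 Bv_def[symmetric] Av_def[symmetric] by (simp add: algebra_simps)
    finally show ?thesis .
  qed
  have PP0e: "PP0 = (\<Prod>n\<in>M. ell th n (cc th b, ss th b))" by (simp add: PP0_def A_def c_def sn_def)
  show ?thesis
    apply (rule exI[of _ p1], rule exI[of _ p2])
    using L1 L2 G1 G2 unfolding PP0e c_def sn_def Bv_def Av_def by auto
qed




lemma sin_ne0:
  assumes "0 \<le> a" "a < 2*pi" "0 \<le> b" "b < 2*pi" "a \<noteq> b" "\<bar>a - b\<bar> \<noteq> pi"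
  shows "sin (a - b) \<noteq> 0"
proof
  assume "sin (a - b) = 0"
  then obtain i :: int where i: "a - b = of_int i * pi" using sin_zero_iff_int2 by blast
  have "\<bar>of_int i * pi\<bar> < 2 * pi" using assms i by linarith
  then have "\<bar>of_int i\<bar> * pi < 2 * pi" by (simp add: abs_mult)
  then have "\<bar>real_of_int i\<bar> < 2" using pi_gt_zero by (simp add: mult_less_cancel_right)
  then have "\<bar>i\<bar> < 2" by linarith
  then have "i = 0 \<or> i = 1 \<or> i = -1" by auto
  then show False using assms i by auto
qed

lemma ell_sin: "ell th n (cc th j, ss th j) = (of_real (sin (th j - th n)) :: 'a::real_normed_field)"
  by (simp add: ell_def cc_def ss_def sin_diff algebra_simps)

lemma ell_self: "ell th b (cc th b, ss th b) = 0"
  by (simp add: ell_def algebra_simps)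

lemma norm_ccss: "(cc th b :: 'a::real_normed_field)^2 + ss th b^2 = 1"
  unfolding cc_def ss_def by (rule norm_cs)

lemma construct':
  fixes th :: "nat \<Rightarrow> real" and s :: "nat \<Rightarrow> 'a::real_normed_field" and Q :: "'a \<times> 'a \<Rightarrow> 'a \<times> 'a"
  assumes hQ1: "hp d (\<lambda>p. fst (Q p))" and hQ2: "hp d (\<lambda>p. snd (Q p))" and d: "1 \<le> d"
    and pl1: "\<And>t. fst (Q (cc th b - t * ss th b, ss th b + t * cc th b)) = poly p1 t"
    and pl2: "\<And>t. snd (Q (cc th b - t * ss th b, ss th b + t * cc th b)) = poly p2 t"
    and C1: "- ss th b * coeff p1 0 + cc th b * coeff p2 0 = 0"
    and C2: "2 * (- ss th b * coeff p1 1 + cc th b * coeff p2 1) - 3 * (cc th b * coeff p1 0 + ss th b * coeff p2 0) = 0"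
  shows "omega_ker {b} s (cusp_branch th s) d Q"
proof -
  have "omega_ker {b} s (cusp_branch th s) d (\<lambda>p. (fst (Q p), snd (Q p)))"
    by (rule construct[OF hQ1 hQ2 d, of th b p1 p2]) (use pl1 pl2 C1 C2 in \<open>auto simp: cc_def ss_def\<close>)
  then show ?thesis by simp
qed

theorem lemma2:
  fixes k j :: nat and th :: "nat \<Rightarrow> real" and s :: "nat \<Rightarrow> 'a::real_normed_field"
    and \<xi> :: "'a \<times> 'a \<Rightarrow> 'a \<times> 'a"
  assumes "k \<ge> 1"
    and "\<forall>l\<le>k+1. 0 \<le> th l \<and> th l < 2 * pi"
    and "\<forall>l\<le>k+1. \<forall>m\<le>k+1. l \<noteq> m \<longrightarrow> th l \<noteq> th m \<and> \<bar>th l - th m\<bar> \<noteq> pi"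
    and "inj_on s {0..k+1}"
    and "j \<le> k"
    and "vf_m0 (k+1) \<xi>"
    and "omega_ker ({0..k} - {j}) s (cusp_branch th s) (k+1) \<xi>"
  shows "\<exists>\<xi>1 \<xi>2. vf_m0 (k+1) \<xi>1 \<and> vf_m0 (k+1) \<xi>2
           \<and> omega_ker ({0..k+1} - {j}) s (cusp_branch th s) (k+1) \<xi>1
           \<and> omega_ker {0..k} s (cusp_branch th s) (k+1) \<xi>2
           \<and> vf_m0 (k+2) (\<lambda>p. \<xi> p - \<xi>1 p - \<xi>2 p)"
proof -
  define M where "M = {0..k+1} - {j}"
  have fM: "finite M" by (simp add: M_def)
  have cM: "card M = k + 1" using assms(5) by (simp add: M_def)
  have c1: "card M \<ge> 1" using cM by simp
  have injM: "inj_on s M" using assms(4) inj_on_subset M_def by blast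
  have m1: "m0 (k+1) (\<lambda>p. fst (\<xi> p))" "m0 (k+1) (\<lambda>p. snd (\<xi> p))" using assms(6) vf_m0_def by auto
  obtain L1 where L1: "hom (k+1) L1" "m0 (Suc (k+1)) (\<lambda>p. fst (\<xi> p) - lf L1 p)" using taylor[OF m1(1)] by blast
  obtain L2 where L2: "hom (k+1) L2" "m0 (Suc (k+1)) (\<lambda>p. snd (\<xi> p) - lf L2 p)" using taylor[OF m1(2)] by blast
  define P where "P p = (lf L1 p, lf L2 p)" for p
  have hP1: "hp (k+1) (\<lambda>p. fst (P p))" unfolding P_def hp_def using L1 by auto
  have hP2: "hp (k+1) (\<lambda>p. snd (P p))" unfolding P_def hp_def using L2 by auto
  have vfP: "vf_m0 (Suc (k+1)) (\<lambda>p. \<xi> p - P p)" unfolding vf_m0_def P_def using L1(2) L2(2) by simp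
  obtain pP1 where pP1: "\<forall>t. lf L1 (cc th j + t * (- ss th j), ss th j + t * cc th j) = poly pP1 t"
    using lf_line by blast
  obtain pP2 where pP2: "\<forall>t. lf L2 (cc th j + t * (- ss th j), ss th j + t * cc th j) = poly pP2 t"
    using lf_line by blast
  have pP1': "fst (P (cc th j - t * ss th j, ss th j + t * cc th j)) = poly pP1 t" for t
    using pP1[rule_format, of t] by (simp add: P_def)
  have pP2': "snd (P (cc th j - t * ss th j, ss th j + t * cc th j)) = poly pP2 t" for t
    using pP2[rule_format, of t] by (simp add: P_def)
  define T1 where "T1 = - ss th j * coeff pP1 0 + cc th j * coeff pP2 0"
  define T2 where "T2 = 2 * (- ss th j * coeff pP1 1 + cc th j * coeff pP2 1) - 3 * (cc th j * coeff pP1 0 + ss th j * coeff pP2 0)"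
  define psi where "psi = (\<Prod>n\<in>M. ell th n (cc th j, ss th j) :: 'a)"
  have psi: "psi \<noteq> 0"
    unfolding psi_def
  proof (subst prod_zero_iff[OF fM], rule notI, elim bexE)
    fix n assume n: "n \<in> M" and z: "ell th n (cc th j, ss th j) = (0::'a)"
    have nj: "n \<le> k + 1" "n \<noteq> j" using n M_def by auto
    have jj: "j \<le> k + 1" using assms(5) by simp
    have "sin (th j - th n) \<noteq> 0"
      using assms(2) assms(3) nj jj by (intro sin_ne0) (auto simp del: of_nat_add)
    then show False using z by (simp add: ell_sin)
  qed
  define K3 where "K3 = (2 * of_nat (card M) + 3 :: 'a)"
  have K3: "K3 \<noteq> 0"
  proof -
    have "K3 = of_nat (2 * card M + 3)" by (simp add: K3_def)
    then show ?thesis by (metis of_nat_eq_0_iff add_is_0 zero_neq_numeral)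
  qed
  define Bt where "Bt = T1 / psi"
  define At where "At = - T2 / (K3 * psi)"
  define V where "V = (At * cc th j - Bt * ss th j, At * ss th j + Bt * cc th j)"
  have nj: "(cc th j :: 'a)^2 + ss th j^2 = 1" by (rule norm_ccss)
  have Vb: "- ss th j * fst V + cc th j * snd V = Bt"
  proof -
    have "- ss th j * fst V + cc th j * snd V = Bt * ((cc th j)^2 + ss th j^2)"
      by (simp add: V_def algebra_simps power2_eq_square)
    then show ?thesis using nj by simp
  qed
  have Va: "cc th j * fst V + ss th j * snd V = At"
  proof -
    have "cc th j * fst V + ss th j * snd V = At * ((cc th j)^2 + ss th j^2)"
      by (simp add: V_def algebra_simps power2_eq_square)
    then show ?thesis using nj by simp
  qed
  define \<xi>1 where "\<xi>1 = xiV th M V"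
  have h11: "hp (k+1) (\<lambda>p. fst (\<xi>1 p))" using hp_xiV(1)[OF fM c1, of th V] cM \<xi>1_def by simp
  have h12: "hp (k+1) (\<lambda>p. snd (\<xi>1 p))" using hp_xiV(2)[OF fM c1, of th V] cM \<xi>1_def by simp
  have vf1: "vf_m0 (k+1) \<xi>1" unfolding vf_m0_def using hp_m0 h11 h12 by blast
  have K1: "omega_ker M s (cusp_branch th s) (k+1) \<xi>1"
  proof (rule omega_ker_all[OF fM injM], rule ballI)
    fix b assume b: "b \<in> M"
    obtain p1 p2 where pp: "\<forall>t. fst (xiV th M V (cc th b - t * ss th b, ss th b + t * cc th b)) = poly p1 t"
      "\<forall>t. snd (xiV th M V (cc th b - t * ss th b, ss th b + t * cc th b)) = poly p2 t"
      "- ss th b * coeff p1 0 + cc th b * coeff p2 0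
         = (\<Prod>n\<in>M. ell th n (cc th b, ss th b)) * (- ss th b * fst V + cc th b * snd V)"
      "2 * (- ss th b * coeff p1 1 + cc th b * coeff p2 1) - 3 * (cc th b * coeff p1 0 + ss th b * coeff p2 0)
         = - (2 * of_nat (card M) + 3) * (\<Prod>n\<in>M. ell th n (cc th b, ss th b)) * (cc th b * fst V + ss th b * snd V)"
      using xiV_cond[OF fM c1, of th V b] by blast
    have z: "(\<Prod>n\<in>M. ell th n (cc th b, ss th b)) = (0::'a)"
    proof -
      have "(\<Prod>n\<in>M. ell th n (cc th b, ss th b)) = ell th b (cc th b, ss th b) * (\<Prod>n\<in>M - {b}. ell th n (cc th b, ss th b))"
        by (rule prod.remove[OF fM b])
      then show ?thesis by (simp add: ell_self)
    qed
    show "omega_ker {b} s (cusp_branch th s) (k+1) \<xi>1"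
      unfolding \<xi>1_def
      by (rule construct'[of "k+1" _ th b p1 p2]) (use h11 h12 pp z in \<open>auto simp: \<xi>1_def\<close>)
  qed
  define \<xi>2 where "\<xi>2 p = \<xi> p - \<xi>1 p" for p
  have vf2: "vf_m0 (k+1) \<xi>2"
  proof -
    have "m0 (k+1) (\<lambda>p. fst (\<xi> p) - fst (\<xi>1 p))" "m0 (k+1) (\<lambda>p. snd (\<xi> p) - snd (\<xi>1 p))"
      using m1 vf1 unfolding vf_m0_def by (auto intro: m0_diff)
    then show ?thesis unfolding vf_m0_def \<xi>2_def by simp
  qed
  have Kj: "omega_ker {j} s (cusp_branch th s) (k+1) (\<lambda>p. \<xi>1 p - P p)"
  proof -
    obtain p1 p2 where pp: "\<forall>t. fst (xiV th M V (cc th j - t * ss th j, ss th j + t * cc th j)) = poly p1 t"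
      "\<forall>t. snd (xiV th M V (cc th j - t * ss th j, ss th j + t * cc th j)) = poly p2 t"
      "- ss th j * coeff p1 0 + cc th j * coeff p2 0
         = (\<Prod>n\<in>M. ell th n (cc th j, ss th j)) * (- ss th j * fst V + cc th j * snd V)"
      "2 * (- ss th j * coeff p1 1 + cc th j * coeff p2 1) - 3 * (cc th j * coeff p1 0 + ss th j * coeff p2 0)
         = - (2 * of_nat (card M) + 3) * (\<Prod>n\<in>M. ell th n (cc th j, ss th j)) * (cc th j * fst V + ss th j * snd V)"
      using xiV_cond[OF fM c1, of th V j] by blast
    have g1: "- ss th j * coeff p1 0 + cc th j * coeff p2 0 = T1"
      using pp(3) unfolding psi_def[symmetric] Vb Bt_def using psi by simp
    have g2: "2 * (- ss th j * coeff p1 1 + cc th j * coeff p2 1) - 3 * (cc th j * coeff p1 0 + ss th j * coeff p2 0) = T2"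
      using pp(4) unfolding psi_def[symmetric] Va At_def K3_def[symmetric] using psi K3 by (simp add: field_simps)
    have hd1: "hp (k+1) (\<lambda>p. fst (\<xi>1 p - P p))" using hp_diff[OF h11 hP1] by simp
    have hd2: "hp (k+1) (\<lambda>p. snd (\<xi>1 p - P p))" using hp_diff[OF h12 hP2] by simp
    show ?thesis
    proof (rule construct'[OF hd1 hd2, of th j "p1 - pP1" "p2 - pP2"])
      show "1 \<le> k + 1" by simp
      fix t
      show "fst (\<xi>1 (cc th j - t * ss th j, ss th j + t * cc th j) - P (cc th j - t * ss th j, ss th j + t * cc th j)) = poly (p1 - pP1) t"
        using pp(1) pP1' unfolding \<xi>1_def by simp
      show "snd (\<xi>1 (cc th j - t * ss th j, ss th j + t * cc th j) - P (cc th j - t * ss th j, ss th j + t * cc th j)) = poly (p2 - pP2) t"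
        using pp(2) pP2' unfolding \<xi>1_def by simp
    next
      show "- ss th j * coeff (p1 - pP1) 0 + cc th j * coeff (p2 - pP2) 0 = 0"
        using g1 unfolding T1_def by (simp add: algebra_simps)
      show "2 * (- ss th j * coeff (p1 - pP1) 1 + cc th j * coeff (p2 - pP2) 1) - 3 * (cc th j * coeff (p1 - pP1) 0 + ss th j * coeff (p2 - pP2) 0) = 0"
        using g2 unfolding T2_def by (simp add: algebra_simps)
    qed
  qed
  have K2: "omega_ker {0..k} s (cusp_branch th s) (k+1) \<xi>2"
  proof (rule omega_ker_all)
    show "finite {0..k}" by simp
    show "inj_on s {0..k}" using assms(4) by (rule inj_on_subset) auto
    show "\<forall>l\<in>{0..k}. omega_ker {l} s (cusp_branch th s) (k+1) \<xi>2"
    proof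
      fix l assume l: "l \<in> {0..k}"
      show "omega_ker {l} s (cusp_branch th s) (k+1) \<xi>2"
      proof (cases "l = j")
        case True
        have A1: "omega_ker {j} s (cusp_branch th s) (k+1) (\<lambda>p. \<xi> p - P p)" by (rule omega_ker_m0[OF vfP])
        have "omega_ker {j} s (cusp_branch th s) (k+1) (\<lambda>p. (\<xi> p - P p) - (\<xi>1 p - P p))"
          by (rule omega_ker_diff[OF A1 Kj])
        then show ?thesis unfolding True \<xi>2_def by simp
      next
        case False
        have a: "omega_ker {l} s (cusp_branch th s) (k+1) \<xi>"
          using assms(7) l False by (elim omega_ker_restrict) auto
        have b: "omega_ker {l} s (cusp_branch th s) (k+1) \<xi>1"
          using K1 l False by (elim omega_ker_restrict) (auto simp: M_def)
        show ?thesis using omega_ker_diff[OF a b] unfolding \<xi>2_def by simp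
      qed
    qed
  qed
  have vf3: "vf_m0 (k+2) (\<lambda>p. \<xi> p - \<xi>1 p - \<xi>2 p)"
  proof -
    have "m0 (k+2) (\<lambda>p. (0::'a))" by (rule hp_m0[OF hp_zero])
    then show ?thesis unfolding vf_m0_def \<xi>2_def by simp
  qed
  show ?thesis
    using vf1 vf2 K1 K2 vf3 unfolding M_def by blast
qed



end
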